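(* The flat braid group $\mathrm{FB}_7$ is (abstractly) commensurable to the right-angled Artin group $A(P_4)$, i.e.\ they contain isomorphic finite-index subgroups.
   Context: $\mathrm{FB}_7=\langle \sigma_1,\ldots,\sigma_6\mid \sigma_i^2=1,\ [\sigma_i,\sigma_j]=1 \text{ whenever } |i-j|\ge 2\rangle$. $P_4$ denotes the path of length $4$ (five vertices $v_0,\dots,v_4$, with $v_i$ adjacent to $v_{i+1}$), and $A(P_4)=\langle v_0,\ldots,v_4\mid [v_i,v_{i+1}]=1,\ 0\le i\le 3\rangle$ is the corresponding right-angled Artin group. *)

theory Defs
  imports "HOL-Algebra.Algebra"
begin

text \<open>A letter is a generator together with a flag; (x, False) stands for x and
(x, True) for the inverse of x.  Words are lists of letters.\<close>

type_synonym 'a pword = "('a \<times> bool) list"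

definition inv_letter :: "'a \<times> bool \<Rightarrow> 'a \<times> bool" where
  "inv_letter a = (fst a, \<not> snd a)"

definition inv_pword :: "'a pword \<Rightarrow> 'a pword" where
  "inv_pword w = rev (map inv_letter w)"

inductive pres_eq :: "'a pword set \<Rightarrow> 'a pword \<Rightarrow> 'a pword \<Rightarrow> bool" for R where
  pres_refl: "pres_eq R w w"
| pres_sym: "pres_eq R u v \<Longrightarrow> pres_eq R v u"
| pres_trans: "pres_eq R u v \<Longrightarrow> pres_eq R v w \<Longrightarrow> pres_eq R u w"
| pres_cancel: "pres_eq R (u @ [a, inv_letter a] @ v) (u @ v)"
| pres_rel: "r \<in> R \<Longrightarrow> pres_eq R (u @ r @ v) (u @ v)"

definition gen_words :: "'a set \<Rightarrow> 'a pword set" where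
  "gen_words S = lists (S \<times> UNIV)"

definition pres_class :: "'a set \<Rightarrow> 'a pword set \<Rightarrow> 'a pword \<Rightarrow> 'a pword set" where
  "pres_class S R w = {v \<in> gen_words S. pres_eq R w v}"

definition pres_group :: "'a set \<Rightarrow> 'a pword set \<Rightarrow> 'a pword set monoid" where
  "pres_group S R =
     \<lparr> carrier = pres_class S R ` gen_words S,
       monoid.mult = (\<lambda>A B. {w \<in> gen_words S. \<exists>u\<in>A. \<exists>v\<in>B. pres_eq R w (u @ v)}),
       one = pres_class S R [] \<rparr>"

definition commutator_word :: "'a \<Rightarrow> 'a \<Rightarrow> 'a pword" where
  "commutator_word x y = [(x, False), (y, False), (x, True), (y, True)]"

text \<open>FB_7 = \<langle>\<sigma>_1..\<sigma>_6 | \<sigma>_i^2, [\<sigma>_i,\<sigma>_j] for |i-j| \<ge> 2\<rangle>; generator \<sigma>_i is i.\<close>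
definition FB7 :: "nat pword set monoid" where
  "FB7 = pres_group {1..6}
     ({[(i, False), (i, False)] | i. i \<in> {1..6}} \<union>
      {commutator_word i j | i j. i \<in> {1..6} \<and> j \<in> {1..6} \<and> (i + 2 \<le> j \<or> j + 2 \<le> i)})"

text \<open>A(P_4) = \<langle>v_0..v_4 | [v_i, v_{i+1}], 0 \<le> i \<le> 3\<rangle>; generator v_i is i.\<close>
definition AP4 :: "nat pword set monoid" where
  "AP4 = pres_group {0..4} {commutator_word i (i + 1) | i. i \<in> {0..3}}"

definition commensurable :: "('a, 'c) monoid_scheme \<Rightarrow> ('b, 'd) monoid_scheme \<Rightarrow> bool" where
  "commensurable G K \<longleftrightarrow>
     (\<exists>H H'. subgroup H G \<and> finite (rcosets\<^bsub>G\<^esub> H) \<and>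
             subgroup H' K \<and> finite (rcosets\<^bsub>K\<^esub> H') \<and>
             G\<lparr>carrier := H\<rparr> \<cong> K\<lparr>carrier := H'\<rparr>)"

end

theory Submission
  imports Defs
begin


lemma inv_letter_inv[simp]: "inv_letter (inv_letter a) = a"
  by (cases a) (simp add: inv_letter_def)
lemma fst_inv_letter[simp]: "fst (inv_letter a) = fst a"
  by (simp add: inv_letter_def)
lemma snd_inv_letter[simp]: "snd (inv_letter a) = (\<not> snd a)"
  by (simp add: inv_letter_def)
lemma inv_letter_pair[simp]: "inv_letter (x, b) = (x, \<not> b)"
  by (simp add: inv_letter_def)

lemma inv_pword_Nil[simp]: "inv_pword [] = []"
  by (simp add: inv_pword_def)
lemma inv_pword_Cons[simp]: "inv_pword (a # w) = inv_pword w @ [inv_letter a]"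
  by (simp add: inv_pword_def)
lemma inv_pword_append[simp]: "inv_pword (u @ v) = inv_pword v @ inv_pword u"
  by (simp add: inv_pword_def)
lemma inv_pword_inv[simp]: "inv_pword (inv_pword w) = w"
  by (induction w) auto

lemma gen_words_append[simp]: "u @ v \<in> gen_words S \<longleftrightarrow> u \<in> gen_words S \<and> v \<in> gen_words S"
  by (auto simp: gen_words_def)
lemma gen_words_Nil[simp]: "[] \<in> gen_words S"
  by (auto simp: gen_words_def)
lemma gen_words_Cons[simp]: "a # u \<in> gen_words S \<longleftrightarrow> fst a \<in> S \<and> u \<in> gen_words S"
  by (cases a) (auto simp: gen_words_def)
lemma gen_words_inv[simp]: "inv_pword u \<in> gen_words S \<longleftrightarrow> u \<in> gen_words S"
  by (induction u) auto

lemma pres_eq_cong: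
  assumes "pres_eq R u v" shows "pres_eq R (x @ u @ y) (x @ v @ y)"
  using assms
proof (induction rule: pres_eq.induct)
  case (pres_refl w) then show ?case by (rule pres_eq.pres_refl)
next
  case (pres_sym u v) then show ?case by (blast intro: pres_eq.pres_sym)
next
  case (pres_trans u v w) then show ?case by (blast intro: pres_eq.pres_trans)
next
  case (pres_cancel u a v)
  have "pres_eq R ((x @ u) @ [a, inv_letter a] @ (v @ y)) ((x @ u) @ (v @ y))"
    by (rule pres_eq.pres_cancel)
  then show ?case by simp
next
  case (pres_rel r u v)
  have "pres_eq R ((x @ u) @ r @ (v @ y)) ((x @ u) @ (v @ y))"
    by (rule pres_eq.pres_rel) fact
  then show ?case by simp
qed

lemma pres_eq_app:
  assumes "pres_eq R u u'" "pres_eq R v v'"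
  shows "pres_eq R (u @ v) (u' @ v')"
proof -
  have 1: "pres_eq R (u @ v) (u' @ v)" using pres_eq_cong[OF assms(1), of "[]" v] by simp
  have 2: "pres_eq R (u' @ v) (u' @ v')" using pres_eq_cong[OF assms(2), of u' "[]"] by simp
  show ?thesis by (rule pres_trans[OF 1 2])
qed

lemma pres_eq_inv_cancel: "pres_eq R (w @ inv_pword w) []"
proof (induction w)
  case Nil then show ?case by (simp add: pres_refl)
next
  case (Cons a w)
  have 1: "pres_eq R ([a] @ (w @ inv_pword w) @ [inv_letter a]) ([a] @ [] @ [inv_letter a])"
    by (rule pres_eq_cong) fact
  have 2: "pres_eq R ([] @ [a, inv_letter a] @ []) ([] @ [])"
    by (rule pres_cancel)
  show ?case using pres_trans[OF 1[simplified] 2[simplified]] by simp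
qed

lemma pres_eq_inv_cancel2: "pres_eq R (inv_pword w @ w) []"
  using pres_eq_inv_cancel[of R "inv_pword w"] by simp

lemma pres_eq_inv:
  assumes "pres_eq R u v" shows "pres_eq R (inv_pword u) (inv_pword v)"
proof -
  have 1: "pres_eq R (inv_pword u @ (v @ inv_pword v)) (inv_pword u @ [])"
    by (rule pres_eq_app[OF pres_refl pres_eq_inv_cancel])
  have 2: "pres_eq R ((inv_pword u @ v) @ inv_pword v) ((inv_pword u @ u) @ inv_pword v)"
    by (rule pres_eq_app[OF pres_eq_app[OF pres_refl pres_sym[OF assms]] pres_refl])
  have 3: "pres_eq R ((inv_pword u @ u) @ inv_pword v) ([] @ inv_pword v)"
    by (rule pres_eq_app[OF pres_eq_inv_cancel2 pres_refl])
  have 4: "pres_eq R (inv_pword u) (inv_pword u @ v @ inv_pword v)" using pres_sym[OF 1] by simp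
  show ?thesis using pres_trans[OF 4 pres_trans[OF 2[simplified] 3[simplified]]] by simp
qed

lemma pres_eq_from_trivial:
  assumes "pres_eq R (u @ inv_pword v) []" shows "pres_eq R u v"
proof -
  have 1: "pres_eq R (u @ (inv_pword v @ v)) (u @ [])"
    by (rule pres_eq_app[OF pres_refl pres_eq_inv_cancel2])
  have 2: "pres_eq R ((u @ inv_pword v) @ v) ([] @ v)"
    by (rule pres_eq_app[OF assms pres_refl])
  show ?thesis using pres_trans[OF pres_sym[OF 1] 2[simplified]] by simp
qed

lemma pres_eq_comm_from_rel:
  assumes "pres_eq R [x, y, inv_letter x, inv_letter y] []"
  shows "pres_eq R [x, y] [y, x]"
proof -
  have "[x, y, inv_letter x, inv_letter y] = [x, y] @ inv_pword [y, x]" by simp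
  then show ?thesis using assms pres_eq_from_trivial by metis
qed

lemma pres_eq_comm_inv:
  assumes "pres_eq R [x, y] [y, x]"
  shows "pres_eq R [inv_letter x, y] [y, inv_letter x]"
proof -
  have 1: "pres_eq R ([inv_letter x, y] @ [x, inv_letter x] @ []) ([inv_letter x, y] @ [])"
    by (rule pres_cancel)
  have 2: "pres_eq R ([inv_letter x] @ [y, x] @ [inv_letter x]) ([inv_letter x] @ [x, y] @ [inv_letter x])"
    by (rule pres_eq_cong) (rule pres_sym, fact)
  have 3: "pres_eq R ([] @ [inv_letter x, x] @ [y, inv_letter x]) ([] @ [y, inv_letter x])"
    using pres_cancel[of R "[]" "inv_letter x" "[y, inv_letter x]"] by simp
  show ?thesis using pres_trans[OF pres_sym[OF 1[simplified]] pres_trans[OF 2[simplified] 3[simplified]]] by simp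
qed

section \<open>A sound word reduction procedure\<close>

fun push :: "('a \<times> bool \<Rightarrow> 'a \<times> bool \<Rightarrow> bool) \<Rightarrow> ('a \<times> bool \<Rightarrow> 'a \<times> bool \<Rightarrow> bool)
    \<Rightarrow> 'a pword \<Rightarrow> 'a \<times> bool \<Rightarrow> 'a pword" where
  "push cm cn [] x = [x]"
| "push cm cn (y # ys) x =
     (if cn y x then ys else if cm y x then y # push cm cn ys x else x # y # ys)"

definition red :: "('a \<times> bool \<Rightarrow> 'a \<times> bool \<Rightarrow> bool) \<Rightarrow> ('a \<times> bool \<Rightarrow> 'a \<times> bool \<Rightarrow> bool)
    \<Rightarrow> 'a pword \<Rightarrow> 'a pword" where
  "red cm cn w = foldl (push cm cn) [] w"

lemma push_sound:
  assumes cm: "\<And>x y. cm x y \<Longrightarrow> pres_eq R [x, y] [y, x]"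
    and cn: "\<And>x y. cn x y \<Longrightarrow> pres_eq R [x, y] []"
  shows "pres_eq R (rev st @ [x]) (rev (push cm cn st x))"
proof (induction st)
  case Nil then show ?case by (simp add: pres_refl)
next
  case (Cons y ys)
  show ?case
  proof (cases "cn y x")
    case True
    have "pres_eq R (rev ys @ [y, x] @ []) (rev ys @ [] @ [])"
      by (rule pres_eq_cong) (rule cn[OF True])
    then show ?thesis using True by simp
  next
    case False
    show ?thesis
    proof (cases "cm y x")
      case True
      have 1: "pres_eq R (rev ys @ [y, x] @ []) (rev ys @ [x, y] @ [])"
        by (rule pres_eq_cong) (rule cm[OF True])
      have 2: "pres_eq R ((rev ys @ [x]) @ [y]) (rev (push cm cn ys x) @ [y])"
        by (rule pres_eq_app[OF Cons pres_refl])
      show ?thesis using True False pres_trans[OF 1[simplified] 2[simplified]] by simp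
    next
      case False2: False
      then show ?thesis using False by (simp add: pres_refl)
    qed
  qed
qed

lemma red_sound_gen:
  assumes cm: "\<And>x y. cm x y \<Longrightarrow> pres_eq R [x, y] [y, x]"
    and cn: "\<And>x y. cn x y \<Longrightarrow> pres_eq R [x, y] []"
  shows "pres_eq R (rev st @ w) (rev (foldl (push cm cn) st w))"
proof (induction w arbitrary: st)
  case Nil then show ?case by (simp add: pres_refl)
next
  case (Cons x w)
  have 1: "pres_eq R ((rev st @ [x]) @ w) (rev (push cm cn st x) @ w)"
    by (rule pres_eq_app[OF push_sound[OF cm cn] pres_refl])
  have 2: "pres_eq R (rev (push cm cn st x) @ w) (rev (foldl (push cm cn) (push cm cn st x) w))"
    by (rule Cons)
  show ?case using pres_trans[OF 1[simplified] 2[simplified]] by simp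
qed

lemma red_sound:
  assumes cm: "\<And>x y. cm x y \<Longrightarrow> pres_eq R [x, y] [y, x]"
    and cn: "\<And>x y. cn x y \<Longrightarrow> pres_eq R [x, y] []"
    and "red cm cn w = []"
  shows "pres_eq R w []"
proof -
  have "pres_eq R (rev [] @ w) (rev (foldl (push cm cn) [] w))"
    by (rule red_sound_gen) (fact cm, fact cn)
  then show ?thesis using assms(3) by (simp add: red_def)
qed

context
  fixes S :: "'a set" and R :: "'a pword set"
begin

abbreviation "cls \<equiv> pres_class S R"

lemma cls_mem: "w \<in> gen_words S \<Longrightarrow> w \<in> cls w"
  by (simp add: pres_class_def pres_refl)

lemma cls_eq_iff:
  assumes "u \<in> gen_words S" "v \<in> gen_words S"
  shows "cls u = cls v \<longleftrightarrow> pres_eq R u v"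
proof
  assume "cls u = cls v"
  then have "v \<in> cls u" using cls_mem[OF assms(2)] by simp
  then show "pres_eq R u v" by (simp add: pres_class_def)
next
  assume "pres_eq R u v"
  then have "pres_eq R v u" by (rule pres_sym)
  then show "cls u = cls v"
    unfolding pres_class_def using \<open>pres_eq R u v\<close> pres_trans by blast
qed

lemma cls_mult:
  assumes "u \<in> gen_words S" "v \<in> gen_words S"
  shows "cls u \<otimes>\<^bsub>pres_group S R\<^esub> cls v = cls (u @ v)"
proof -
  have "x \<in> cls (u @ v)" if "x \<in> gen_words S" "u' \<in> cls u" "v' \<in> cls v" "pres_eq R x (u' @ v')" for x u' v'
  proof -
    have e1: "pres_eq R u u'" and e2: "pres_eq R v v'" using that by (auto simp: pres_class_def)
    have e3: "pres_eq R (u' @ v') (u @ v)" by (rule pres_sym[OF pres_eq_app[OF e1 e2]])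
    have "pres_eq R (u @ v) x" by (rule pres_trans[OF pres_sym[OF e3] pres_sym[OF that(4)]])
    then show ?thesis using that(1) by (simp add: pres_class_def)
  qed
  moreover have "\<exists>u'\<in>cls u. \<exists>v'\<in>cls v. pres_eq R x (u' @ v')" if "x \<in> cls (u @ v)" for x
  proof -
    have "u \<in> cls u" "v \<in> cls v" using cls_mem assms by auto
    moreover have "pres_eq R x (u @ v)" using that unfolding pres_class_def by (blast intro: pres_sym)
    ultimately show ?thesis by blast
  qed
  moreover have "cls (u @ v) \<subseteq> gen_words S" by (auto simp: pres_class_def)
  ultimately show ?thesis
    unfolding pres_group_def by auto
qed

lemma carrier_pres: "carrier (pres_group S R) = cls ` gen_words S"
  by (simp add: pres_group_def)

lemma one_pres: "\<one>\<^bsub>pres_group S R\<^esub> = cls []"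
  by (simp add: pres_group_def)

lemma group_pres: "group (pres_group S R)"
proof (rule groupI)
  fix x y assume "x \<in> carrier (pres_group S R)" "y \<in> carrier (pres_group S R)"
  then obtain u v where "u \<in> gen_words S" "v \<in> gen_words S" "x = cls u" "y = cls v"
    by (auto simp: carrier_pres)
  then show "x \<otimes>\<^bsub>pres_group S R\<^esub> y \<in> carrier (pres_group S R)"
    by (simp add: cls_mult carrier_pres)
next
  show "\<one>\<^bsub>pres_group S R\<^esub> \<in> carrier (pres_group S R)"
    by (simp add: carrier_pres one_pres)
next
  fix x y z assume "x \<in> carrier (pres_group S R)" "y \<in> carrier (pres_group S R)"
    "z \<in> carrier (pres_group S R)"
  then obtain u v w where "u \<in> gen_words S" "v \<in> gen_words S" "w \<in> gen_words S"
    "x = cls u" "y = cls v" "z = cls w"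
    by (auto simp: carrier_pres)
  then show "x \<otimes>\<^bsub>pres_group S R\<^esub> y \<otimes>\<^bsub>pres_group S R\<^esub> z =
      x \<otimes>\<^bsub>pres_group S R\<^esub> (y \<otimes>\<^bsub>pres_group S R\<^esub> z)"
    by (simp add: cls_mult)
next
  fix x assume "x \<in> carrier (pres_group S R)"
  then obtain u where "u \<in> gen_words S" "x = cls u"
    by (auto simp: carrier_pres)
  then show "\<one>\<^bsub>pres_group S R\<^esub> \<otimes>\<^bsub>pres_group S R\<^esub> x = x"
    by (simp add: cls_mult one_pres)
next
  fix x assume "x \<in> carrier (pres_group S R)"
  then obtain u where u: "u \<in> gen_words S" "x = cls u"
    by (auto simp: carrier_pres)
  have "cls (inv_pword u) \<otimes>\<^bsub>pres_group S R\<^esub> x = cls []"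
    using u by (simp add: cls_mult cls_eq_iff pres_eq_inv_cancel2)
  moreover have "cls (inv_pword u) \<in> carrier (pres_group S R)"
    using u by (simp add: carrier_pres)
  ultimately show "\<exists>y\<in>carrier (pres_group S R). y \<otimes>\<^bsub>pres_group S R\<^esub> x = \<one>\<^bsub>pres_group S R\<^esub>"
    by (auto simp: one_pres)
qed

lemma cls_inv:
  assumes "u \<in> gen_words S"
  shows "inv\<^bsub>pres_group S R\<^esub> (cls u) = cls (inv_pword u)"
proof (rule group.inv_equality[OF group_pres])
  show "cls (inv_pword u) \<otimes>\<^bsub>pres_group S R\<^esub> cls u = \<one>\<^bsub>pres_group S R\<^esub>"
    using assms by (simp add: cls_mult cls_eq_iff pres_eq_inv_cancel2 one_pres)
qed (use assms in \<open>auto simp: carrier_pres\<close>)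

end

section \<open>Tracing words through finite coset tables\<close>

fun tend :: "(nat \<Rightarrow> nat \<Rightarrow> nat) \<Rightarrow> nat \<Rightarrow> nat pword \<Rightarrow> nat" where
  "tend p d [] = d"
| "tend p d (x # w) = tend p (p d (fst x)) w"

definition lab :: "(nat \<Rightarrow> nat \<Rightarrow> nat) \<Rightarrow> (nat \<Rightarrow> nat \<Rightarrow> nat pword) \<Rightarrow> nat \<Rightarrow> nat \<times> bool \<Rightarrow> nat pword" where
  "lab p l d x = (if snd x then inv_pword (l (p d (fst x)) (fst x)) else l d (fst x))"

fun tout :: "(nat \<Rightarrow> nat \<Rightarrow> nat) \<Rightarrow> (nat \<Rightarrow> nat \<Rightarrow> nat pword) \<Rightarrow> nat \<Rightarrow> nat pword \<Rightarrow> nat pword" where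
  "tout p l d [] = []"
| "tout p l d (x # w) = lab p l d x @ tout p l (p d (fst x)) w"

lemma tend_append[simp]: "tend p d (u @ v) = tend p (tend p d u) v"
  by (induction u arbitrary: d) auto

lemma tout_append[simp]: "tout p l d (u @ v) = tout p l d u @ tout p l (tend p d u) v"
  by (induction u arbitrary: d) auto

context
  fixes p :: "nat \<Rightarrow> nat \<Rightarrow> nat" and l :: "nat \<Rightarrow> nat \<Rightarrow> nat pword"
  assumes pinv: "\<And>d g. p (p d g) g = d"
begin

lemma tend_inv: "tend p (tend p d u) (inv_pword u) = d"
  by (induction u arbitrary: d) (auto simp: pinv)

lemma tout_inv: "tout p l (tend p d u) (inv_pword u) = inv_pword (tout p l d u)"
proof (induction u arbitrary: d)
  case Nil then show ?case by simp
next
  case (Cons x u)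
  have "tend p (tend p (p d (fst x)) u) (inv_pword u) = p d (fst x)" by (rule tend_inv)
  then show ?case using Cons[of "p d (fst x)"] by (auto simp: lab_def pinv)
qed

lemma lab_cancel: "pres_eq R (lab p l d a @ lab p l (p d (fst a)) (inv_letter a)) []"
  by (auto simp: lab_def pinv pres_eq_inv_cancel pres_eq_inv_cancel2)

lemma trace_respects:
  assumes rel: "\<And>r d. r \<in> R1 \<Longrightarrow> tend p d r = d \<and> pres_eq R2 (tout p l d r) []"
    and "pres_eq R1 u v"
  shows "tend p d u = tend p d v \<and> pres_eq R2 (tout p l d u) (tout p l d v)"
  using assms(2)
proof (induction arbitrary: d rule: pres_eq.induct)
  case (pres_refl w) then show ?case by (simp add: pres_eq.pres_refl)
next
  case (pres_sym u v) then show ?case by (metis pres_eq.pres_sym)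
next
  case (pres_trans u v w) then show ?case by (metis pres_eq.pres_trans)
next
  case (pres_cancel u a v)
  let ?e = "tend p d u"
  have 1: "tend p ?e [a, inv_letter a] = ?e" by (simp add: pinv)
  have "pres_eq R2 (tout p l d u @ (lab p l ?e a @ lab p l (p ?e (fst a)) (inv_letter a)) @ tout p l ?e v)
     (tout p l d u @ [] @ tout p l ?e v)"
    by (rule pres_eq_cong) (rule lab_cancel)
  then show ?case using 1 by (simp add: pinv)
next
  case (pres_rel r u v)
  let ?e = "tend p d u"
  have r: "tend p ?e r = ?e" "pres_eq R2 (tout p l ?e r) []" using rel[OF pres_rel] by auto
  have "pres_eq R2 (tout p l d u @ tout p l ?e r @ tout p l ?e v) (tout p l d u @ [] @ tout p l ?e v)"
    by (rule pres_eq_cong) (rule r(2))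
  then show ?case using r(1) by simp
qed

end

lemma tout_words:
  assumes "\<And>d g. l d g \<in> gen_words S"
  shows "tout p l d w \<in> gen_words S"
  using assms by (induction w arbitrary: d) (auto simp: lab_def)

locale half =
  fixes S1 :: "nat set" and R1 :: "nat pword set" and p1 :: "nat \<Rightarrow> nat \<Rightarrow> nat"
    and l1 :: "nat \<Rightarrow> nat \<Rightarrow> nat pword" and t1 :: "nat \<Rightarrow> nat pword" and n1 :: nat
    and R2 :: "nat pword set" and p2 :: "nat \<Rightarrow> nat \<Rightarrow> nat" and l2 :: "nat \<Rightarrow> nat \<Rightarrow> nat pword"
  assumes inv1: "\<And>d g. p1 (p1 d g) g = d" and inv2: "\<And>d g. p2 (p2 d g) g = d"
    and cl1: "\<And>d g. tend p2 0 (l1 d g) = 0"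
    and b1: "\<And>d g. d < n1 \<Longrightarrow> p1 d g < n1"
    and back1: "\<And>d g. d < n1 \<Longrightarrow> g \<in> S1 \<Longrightarrow>
       pres_eq R1 (tout p2 l2 0 (l1 d g)) (t1 d @ [(g, False)] @ inv_pword (t1 (p1 d g)))"
begin

lemma tend_bound: "d < n1 \<Longrightarrow> tend p1 d w < n1"
  by (induction w arbitrary: d) (auto simp: b1)

lemma tend_lab: "tend p2 0 (lab p1 l1 d x) = 0"
proof (cases "snd x")
  case True
  have "tend p2 (tend p2 0 (l1 (p1 d (fst x)) (fst x))) (inv_pword (l1 (p1 d (fst x)) (fst x))) = 0"
    by (rule tend_inv[OF inv2])
  then show ?thesis using True by (simp add: lab_def cl1)
next
  case False then show ?thesis by (simp add: lab_def cl1)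
qed

lemma tend_tout: "tend p2 0 (tout p1 l1 d w) = 0"
  by (induction w arbitrary: d) (auto simp: tend_lab)

lemma tout2_inv:
  assumes "tend p2 0 u = 0"
  shows "tout p2 l2 0 (inv_pword u) = inv_pword (tout p2 l2 0 u)"
proof -
  have "tout p2 l2 (tend p2 0 u) (inv_pword u) = inv_pword (tout p2 l2 0 u)"
    by (rule tout_inv[OF inv2])
  then show ?thesis using assms by simp
qed

lemma key:
  assumes "w \<in> gen_words S1" "d < n1"
  shows "pres_eq R1 (tout p2 l2 0 (tout p1 l1 d w)) (t1 d @ w @ inv_pword (t1 (tend p1 d w)))"
  using assms
proof (induction w arbitrary: d)
  case Nil
  then show ?case using pres_eq_inv_cancel[of R1 "t1 d"] by (simp add: pres_sym)
next
  case (Cons x w)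
  obtain g s where x: "x = (g, s)" by (cases x)
  have g: "g \<in> S1" and w: "w \<in> gen_words S1" using Cons.prems x by auto
  let ?e = "p1 d g"
  have e: "?e < n1" using b1 Cons.prems by auto
  let ?A = "lab p1 l1 d x"
  have split: "tout p2 l2 0 (tout p1 l1 d (x # w)) = tout p2 l2 0 ?A @ tout p2 l2 0 (tout p1 l1 ?e w)"
    using tend_lab[of d x] x by simp
  have IH: "pres_eq R1 (tout p2 l2 0 (tout p1 l1 ?e w)) (t1 ?e @ w @ inv_pword (t1 (tend p1 ?e w)))"
    using Cons.IH[OF w e] .
  have A: "pres_eq R1 (tout p2 l2 0 ?A) (t1 d @ [x] @ inv_pword (t1 ?e))"
  proof (cases s)
    case False
    then show ?thesis using back1[OF Cons.prems(2) g] x by (simp add: lab_def)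
  next
    case True
    have "pres_eq R1 (tout p2 l2 0 (l1 ?e g)) (t1 ?e @ [(g, False)] @ inv_pword (t1 (p1 ?e g)))"
      using back1[OF e g] .
    then have "pres_eq R1 (inv_pword (tout p2 l2 0 (l1 ?e g))) (inv_pword (t1 ?e @ [(g, False)] @ inv_pword (t1 d)))"
      using pres_eq_inv inv1 by metis
    moreover have "tout p2 l2 0 (inv_pword (l1 ?e g)) = inv_pword (tout p2 l2 0 (l1 ?e g))"
      by (rule tout2_inv[OF cl1])
    ultimately show ?thesis using True x by (simp add: lab_def)
  qed
  have "pres_eq R1 (tout p2 l2 0 ?A @ tout p2 l2 0 (tout p1 l1 ?e w))
     ((t1 d @ [x] @ inv_pword (t1 ?e)) @ (t1 ?e @ w @ inv_pword (t1 (tend p1 ?e w))))"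
    by (rule pres_eq_app[OF A IH])
  moreover have "pres_eq R1 ((t1 d @ [x]) @ (inv_pword (t1 ?e) @ t1 ?e) @ (w @ inv_pword (t1 (tend p1 ?e w))))
     ((t1 d @ [x]) @ [] @ (w @ inv_pword (t1 (tend p1 ?e w))))"
    by (rule pres_eq_cong) (rule pres_eq_inv_cancel2)
  ultimately show ?case using split x by (auto elim: pres_trans)
qed

end

locale cdata =
  fixes S1 :: "nat set" and R1 :: "nat pword set" and p1 :: "nat \<Rightarrow> nat \<Rightarrow> nat"
    and l1 :: "nat \<Rightarrow> nat \<Rightarrow> nat pword" and t1 :: "nat \<Rightarrow> nat pword" and n1 :: nat
    and S2 :: "nat set" and R2 :: "nat pword set" and p2 :: "nat \<Rightarrow> nat \<Rightarrow> nat"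
    and l2 :: "nat \<Rightarrow> nat \<Rightarrow> nat pword" and t2 :: "nat \<Rightarrow> nat pword" and n2 :: nat
  assumes inv1: "\<And>d g. p1 (p1 d g) g = d" and inv2: "\<And>d g. p2 (p2 d g) g = d"
    and rel1: "\<And>r d. r \<in> R1 \<Longrightarrow> tend p1 d r = d \<and> pres_eq R2 (tout p1 l1 d r) []"
    and rel2: "\<And>r d. r \<in> R2 \<Longrightarrow> tend p2 d r = d \<and> pres_eq R1 (tout p2 l2 d r) []"
    and cl1: "\<And>d g. tend p2 0 (l1 d g) = 0" and cl2: "\<And>d g. tend p1 0 (l2 d g) = 0"
    and w1: "\<And>d g. l1 d g \<in> gen_words S2" and w2: "\<And>d g. l2 d g \<in> gen_words S1"
    and b1: "\<And>d g. d < n1 \<Longrightarrow> p1 d g < n1" and b2: "\<And>d g. d < n2 \<Longrightarrow> p2 d g < n2"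
    and back1: "\<And>d g. d < n1 \<Longrightarrow> g \<in> S1 \<Longrightarrow>
       pres_eq R1 (tout p2 l2 0 (l1 d g)) (t1 d @ [(g, False)] @ inv_pword (t1 (p1 d g)))"
    and back2: "\<And>d g. d < n2 \<Longrightarrow> g \<in> S2 \<Longrightarrow>
       pres_eq R2 (tout p1 l1 0 (l2 d g)) (t2 d @ [(g, False)] @ inv_pword (t2 (p2 d g)))"
    and t10: "t1 0 = []" and t20: "t2 0 = []" and n1: "0 < n1" and n2: "0 < n2"
begin

sublocale h1: half S1 R1 p1 l1 t1 n1 R2 p2 l2
  using inv1 inv2 cl1 b1 back1 by unfold_locales auto

sublocale h2: half S2 R2 p2 l2 t2 n2 R1 p1 l1
  using inv1 inv2 cl2 b2 back2 by unfold_locales auto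

abbreviation "G1 \<equiv> pres_group S1 R1"
abbreviation "G2 \<equiv> pres_group S2 R2"

definition "H1 = {pres_class S1 R1 w | w. w \<in> gen_words S1 \<and> tend p1 0 w = 0}"
definition "H2 = {pres_class S2 R2 w | w. w \<in> gen_words S2 \<and> tend p2 0 w = 0}"

definition "F A = pres_class S2 R2 (tout p1 l1 0 (SOME w. w \<in> A))"

lemma resp1: "pres_eq R1 u v \<Longrightarrow> tend p1 d u = tend p1 d v \<and> pres_eq R2 (tout p1 l1 d u) (tout p1 l1 d v)"
  by (rule trace_respects[OF inv1 rel1])

lemma resp2: "pres_eq R2 u v \<Longrightarrow> tend p2 d u = tend p2 d v \<and> pres_eq R1 (tout p2 l2 d u) (tout p2 l2 d v)"
  by (rule trace_respects[OF inv2 rel2])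

lemma F_cls:
  assumes "w \<in> gen_words S1"
  shows "F (pres_class S1 R1 w) = pres_class S2 R2 (tout p1 l1 0 w)"
proof -
  let ?w = "SOME v. v \<in> pres_class S1 R1 w"
  have "?w \<in> pres_class S1 R1 w" by (rule someI[of _ w]) (rule cls_mem[OF assms])
  then have "?w \<in> gen_words S1" "pres_eq R1 w ?w" by (auto simp: pres_class_def)
  then have "pres_eq R2 (tout p1 l1 0 w) (tout p1 l1 0 ?w)" using resp1 by blast
  then have "pres_class S2 R2 (tout p1 l1 0 w) = pres_class S2 R2 (tout p1 l1 0 ?w)"
    by (simp add: cls_eq_iff tout_words[OF w1])
  then show ?thesis by (simp add: F_def)
qed

lemma H1_sub: "H1 \<subseteq> carrier G1"
  by (auto simp: H1_def carrier_pres)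

lemma H2_sub: "H2 \<subseteq> carrier G2"
  by (auto simp: H2_def carrier_pres)

lemma subgroup_gen:
  fixes S :: "nat set" and R p
  assumes pinv: "\<And>d g. p (p d g) g = d"
  shows "subgroup {pres_class S R w | w. w \<in> gen_words S \<and> tend p 0 w = 0} (pres_group S R)"
proof (rule group.subgroupI[OF group_pres])
  show "{pres_class S R w | w. w \<in> gen_words S \<and> tend p 0 w = 0} \<subseteq> carrier (pres_group S R)"
    by (auto simp: carrier_pres)
  show "{pres_class S R w | w. w \<in> gen_words S \<and> tend p 0 w = 0} \<noteq> {}"
    using gen_words_Nil tend.simps(1) by blast
next
  fix a assume "a \<in> {pres_class S R w | w. w \<in> gen_words S \<and> tend p 0 w = 0}"
  then obtain w where w: "a = pres_class S R w" "w \<in> gen_words S" "tend p 0 w = 0" by auto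
  have "tend p (tend p 0 w) (inv_pword w) = 0" by (rule tend_inv[OF pinv])
  then have "tend p 0 (inv_pword w) = 0" using w by simp
  then show "inv\<^bsub>pres_group S R\<^esub> a \<in> {pres_class S R w | w. w \<in> gen_words S \<and> tend p 0 w = 0}"
    using w by (auto simp: cls_inv)
next
  fix a b assume "a \<in> {pres_class S R w | w. w \<in> gen_words S \<and> tend p 0 w = 0}"
    "b \<in> {pres_class S R w | w. w \<in> gen_words S \<and> tend p 0 w = 0}"
  then obtain u v where "a = pres_class S R u" "u \<in> gen_words S" "tend p 0 u = 0"
    "b = pres_class S R v" "v \<in> gen_words S" "tend p 0 v = 0" by auto
  then show "a \<otimes>\<^bsub>pres_group S R\<^esub> b \<in> {pres_class S R w | w. w \<in> gen_words S \<and> tend p 0 w = 0}"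
    by (auto simp: cls_mult intro!: exI[of _ "u @ v"])
qed

lemma finite_index_gen:
  fixes S :: "nat set" and R p and n :: nat
  assumes pinv: "\<And>d g. p (p d g) g = d" and bd: "\<And>d w. d < n \<Longrightarrow> tend p d w < n" and n: "0 < n"
  shows "finite (rcosets\<^bsub>pres_group S R\<^esub> {pres_class S R w | w. w \<in> gen_words S \<and> tend p 0 w = 0})"
proof -
  let ?G = "pres_group S R"
  let ?H = "{pres_class S R w | w. w \<in> gen_words S \<and> tend p 0 w = 0}"
  let ?rep = "\<lambda>e. SOME v. v \<in> gen_words S \<and> tend p 0 v = e"
  have sg: "subgroup ?H ?G" by (rule subgroup_gen[OF pinv])
  have grp: "group ?G" by (rule group_pres)
  have "rcosets\<^bsub>?G\<^esub> ?H \<subseteq> (\<lambda>e. ?H #>\<^bsub>?G\<^esub> pres_class S R (?rep e)) ` {..<n}"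
  proof
    fix Xc assume "Xc \<in> rcosets\<^bsub>?G\<^esub> ?H"
    then obtain u where u: "u \<in> gen_words S" "Xc = ?H #>\<^bsub>?G\<^esub> pres_class S R u"
      by (auto simp: RCOSETS_def carrier_pres)
    let ?e = "tend p 0 u"
    have e: "?e < n" using bd n by auto
    have v: "?rep ?e \<in> gen_words S \<and> tend p 0 (?rep ?e) = ?e"
      by (rule someI[of _ u]) (simp add: u)
    let ?v = "?rep ?e"
    have "tend p (tend p 0 ?v) (inv_pword ?v) = 0" by (rule tend_inv[OF pinv])
    then have "tend p 0 (u @ inv_pword ?v) = 0"
      using v by simp
    then have "pres_class S R u \<otimes>\<^bsub>?G\<^esub> inv\<^bsub>?G\<^esub> (pres_class S R ?v) \<in> ?H"
      using u v by (auto simp: cls_inv cls_mult intro!: exI[of _ "u @ inv_pword ?v"])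
    then have "pres_class S R u \<in> ?H #>\<^bsub>?G\<^esub> pres_class S R ?v"
      using subgroup.rcos_module_rev[OF sg grp] u v by (auto simp: carrier_pres)
    then have "?H #>\<^bsub>?G\<^esub> pres_class S R ?v = ?H #>\<^bsub>?G\<^esub> pres_class S R u"
      using group.repr_independence[OF grp _ _ sg] v by (auto simp: carrier_pres)
    then show "Xc \<in> (\<lambda>e. ?H #>\<^bsub>?G\<^esub> pres_class S R (?rep e)) ` {..<n}"
      using u e by auto
  qed
  then show ?thesis by (rule finite_subset) auto
qed

lemma F_iso: "F \<in> iso (G1\<lparr>carrier := H1\<rparr>) (G2\<lparr>carrier := H2\<rparr>)"
proof -
  have hom: "F \<in> hom (G1\<lparr>carrier := H1\<rparr>) (G2\<lparr>carrier := H2\<rparr>)"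
  proof (rule homI)
    fix A assume "A \<in> carrier (G1\<lparr>carrier := H1\<rparr>)"
    then obtain w where w: "A = pres_class S1 R1 w" "w \<in> gen_words S1" "tend p1 0 w = 0"
      by (auto simp: H1_def)
    show "F A \<in> carrier (G2\<lparr>carrier := H2\<rparr>)"
      using w h1.tend_tout tout_words[OF w1] by (auto simp: F_cls H2_def)
  next
    fix A B assume "A \<in> carrier (G1\<lparr>carrier := H1\<rparr>)" "B \<in> carrier (G1\<lparr>carrier := H1\<rparr>)"
    then obtain u v where u: "A = pres_class S1 R1 u" "u \<in> gen_words S1" "tend p1 0 u = 0"
      and v: "B = pres_class S1 R1 v" "v \<in> gen_words S1" "tend p1 0 v = 0"
      by (auto simp: H1_def)
    show "F (A \<otimes>\<^bsub>G1\<lparr>carrier := H1\<rparr>\<^esub> B) = F A \<otimes>\<^bsub>G2\<lparr>carrier := H2\<rparr>\<^esub> F B"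
      using u v tout_words[OF w1] by (simp add: cls_mult F_cls)
  qed
  have inj: "inj_on F H1"
  proof (rule inj_onI)
    fix A B assume "A \<in> H1" "B \<in> H1" and eq: "F A = F B"
    then obtain u v where u: "A = pres_class S1 R1 u" "u \<in> gen_words S1" "tend p1 0 u = 0"
      and v: "B = pres_class S1 R1 v" "v \<in> gen_words S1" "tend p1 0 v = 0"
      by (auto simp: H1_def)
    have "pres_eq R2 (tout p1 l1 0 u) (tout p1 l1 0 v)"
      using eq u v by (simp add: F_cls cls_eq_iff tout_words[OF w1])
    then have "pres_eq R1 (tout p2 l2 0 (tout p1 l1 0 u)) (tout p2 l2 0 (tout p1 l1 0 v))"
      using resp2 by blast
    moreover have "pres_eq R1 (tout p2 l2 0 (tout p1 l1 0 u)) u"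
      using h1.key[OF u(2) n1] u(3) by (simp add: t10)
    moreover have "pres_eq R1 (tout p2 l2 0 (tout p1 l1 0 v)) v"
      using h1.key[OF v(2) n1] v(3) by (simp add: t10)
    ultimately have "pres_eq R1 u v" by (meson pres_sym pres_trans)
    then show "A = B" using u v by (simp add: cls_eq_iff)
  qed
  have img: "F ` H1 = H2"
  proof
    show "F ` H1 \<subseteq> H2"
      using h1.tend_tout tout_words[OF w1] by (auto simp: H1_def H2_def F_cls)
  next
    show "H2 \<subseteq> F ` H1"
    proof
      fix Xc assume "Xc \<in> H2"
      then obtain x where x: "Xc = pres_class S2 R2 x" "x \<in> gen_words S2" "tend p2 0 x = 0"
        by (auto simp: H2_def)
      let ?w = "tout p2 l2 0 x"
      have w: "?w \<in> gen_words S1" "tend p1 0 ?w = 0"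
        using tout_words[OF w2] h2.tend_tout by auto
      have "pres_eq R2 (tout p1 l1 0 ?w) x"
        using h2.key[OF x(2) n2] x(3) by (simp add: t20)
      then have "F (pres_class S1 R1 ?w) = Xc"
        using x w by (simp add: F_cls cls_eq_iff tout_words[OF w1])
      moreover have "pres_class S1 R1 ?w \<in> H1" using w by (auto simp: H1_def)
      ultimately show "Xc \<in> F ` H1" by blast
    qed
  qed
  show ?thesis using hom inj img by (auto simp: iso_def bij_betw_def)
qed

theorem commensurable_result: "commensurable G1 G2"
  unfolding commensurable_def
proof (intro exI conjI)
  show "subgroup H1 G1" unfolding H1_def by (rule subgroup_gen[OF inv1])
  show "subgroup H2 G2" unfolding H2_def by (rule subgroup_gen[OF inv2])
  show "finite (rcosets\<^bsub>G1\<^esub> H1)" unfolding H1_def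
    by (rule finite_index_gen[OF inv1 h1.tend_bound n1])
  show "finite (rcosets\<^bsub>G2\<^esub> H2)" unfolding H2_def
    by (rule finite_index_gen[OF inv2 h2.tend_bound n2])
  show "G1\<lparr>carrier := H1\<rparr> \<cong> G2\<lparr>carrier := H2\<rparr>"
    by (rule is_isoI[OF F_iso])
qed

end



definition P1tab :: "nat list list" where
  "P1tab = [[4, 4, 2, 18, 1, 9],
   [5, 5, 3, 19, 0, 8],
   [6, 6, 0, 16, 3, 11],
   [7, 7, 1, 17, 2, 10],
   [0, 0, 6, 22, 5, 13],
   [1, 1, 7, 23, 4, 12],
   [2, 2, 4, 20, 7, 15],
   [3, 3, 5, 21, 6, 14],
   [12, 12, 10, 26, 9, 1],
   [13, 13, 11, 27, 8, 0],
   [14, 14, 8, 24, 11, 3],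
   [15, 15, 9, 25, 10, 2],
   [8, 8, 14, 30, 13, 5],
   [9, 9, 15, 31, 12, 4],
   [10, 10, 12, 28, 15, 7],
   [11, 11, 13, 29, 14, 6],
   [20, 20, 18, 2, 17, 25],
   [21, 21, 19, 3, 16, 24],
   [22, 22, 16, 0, 19, 27],
   [23, 23, 17, 1, 18, 26],
   [16, 16, 22, 6, 21, 29],
   [17, 17, 23, 7, 20, 28],
   [18, 18, 20, 4, 23, 31],
   [19, 19, 21, 5, 22, 30],
   [28, 28, 26, 10, 25, 17],
   [29, 29, 27, 11, 24, 16],
   [30, 30, 24, 8, 27, 19],
   [31, 31, 25, 9, 26, 18],
   [24, 24, 30, 14, 29, 21],
   [25, 25, 31, 15, 28, 20],
   [26, 26, 28, 12, 31, 23],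
   [27, 27, 29, 13, 30, 22]]"

definition L1tab :: "nat pword list list" where
  "L1tab = [[[], [(1, True)], [], [(0, False), (4, True)], [], [(2, True)]],
   [[], [(1, True)], [], [(0, False), (0, False), (0, False), (2, True), (0, True), (0, False), (4, True), (4, False), (4, False), (2, True), (2, False), (4, True), (4, True)], [], []],
   [[], [(3, True)], [], [], [], [(2, True)]],
   [[], [(3, True)], [], [(2, False), (4, True), (4, True)], [], []],
   [[], [(1, False)], [], [(0, False), (4, True)], [], [(2, True)]],
   [[], [(1, False)], [], [(0, False), (0, False), (0, False), (2, True), (0, True), (0, False), (4, True), (4, False), (4, False), (2, True), (2, False), (4, True), (4, True)], [], []],
   [[], [(3, False)], [], [], [], [(2, True)]],
   [[], [(3, False)], [], [(2, False), (4, True), (4, True)], [], []],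
   [[], [(1, True)], [], [(0, False), (0, False), (0, False), (2, True), (0, True), (0, False), (4, True), (4, False), (4, False), (2, True)], [], []],
   [[], [(1, True)], [], [(2, False), (0, False), (4, True), (4, False), (0, True), (0, False), (2, True), (0, True), (0, False), (4, True), (4, False), (4, False), (2, True)], [], [(2, False)]],
   [[], [(3, True)], [], [], [], []],
   [[], [(3, True)], [], [(2, False), (4, False), (0, True), (0, False), (2, True), (0, True), (0, False), (4, True), (4, False), (4, False), (2, True)], [], [(2, False)]],
   [[], [(1, False)], [], [(0, False), (0, False), (0, False), (2, True), (0, True), (0, False), (4, True), (4, False), (4, False), (2, True)], [], []],
   [[], [(1, False)], [], [(2, False), (0, False), (4, True), (4, False), (0, True), (0, False), (2, True), (0, True), (0, False), (4, True), (4, False), (4, False), (2, True)], [], [(2, False)]],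
   [[], [(3, False)], [], [], [], []],
   [[], [(3, False)], [], [(2, False), (4, False), (0, True), (0, False), (2, True), (0, True), (0, False), (4, True), (4, False), (4, False), (2, True)], [], [(2, False)]],
   [[], [(3, True)], [], [], [], [(4, False), (0, True), (0, False), (2, True), (0, True), (0, False), (4, True), (4, False), (4, False), (2, True)]],
   [[], [(3, True)], [], [(4, False), (4, False), (2, True)], [], [(4, False), (4, False), (2, True)]],
   [[], [(4, False), (0, True), (1, True), (0, False), (4, True)], [], [(4, False), (0, True)], [], [(4, False), (0, True), (0, False), (2, True), (0, True), (0, False), (4, True), (4, False), (4, False), (2, True)]],
   [[], [(4, False), (0, True), (1, True), (0, False), (4, True)], [], [(4, False), (4, False), (2, True), (2, False), (4, True), (4, True), (4, False), (0, True), (0, False), (2, False), (0, True), (0, True), (0, True)], [], [(4, False), (4, False), (2, True)]],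
   [[], [(3, False)], [], [], [], [(4, False), (0, True), (0, False), (2, True), (0, True), (0, False), (4, True), (4, False), (4, False), (2, True)]],
   [[], [(3, False)], [], [(4, False), (4, False), (2, True)], [], [(4, False), (4, False), (2, True)]],
   [[], [(4, False), (0, True), (1, False), (0, False), (4, True)], [], [(4, False), (0, True)], [], [(4, False), (0, True), (0, False), (2, True), (0, True), (0, False), (4, True), (4, False), (4, False), (2, True)]],
   [[], [(4, False), (0, True), (1, False), (0, False), (4, True)], [], [(4, False), (4, False), (2, True), (2, False), (4, True), (4, True), (4, False), (0, True), (0, False), (2, False), (0, True), (0, True), (0, True)], [], [(4, False), (4, False), (2, True)]],
   [[], [(3, True)], [], [], [], [(2, False), (4, True), (4, True)]],
   [[], [(3, True)], [], [(2, False), (4, True), (4, True), (4, False), (0, True), (0, False), (2, False), (0, True), (0, False), (4, True), (2, True)], [], [(2, False), (4, True), (4, True), (4, False), (0, True), (0, False), (2, False), (0, True), (0, False), (4, True)]],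
   [[], [(2, False), (4, True), (4, True), (4, False), (0, True), (0, False), (2, False), (0, True), (0, True), (0, True), (1, True), (0, False), (0, False), (0, False), (2, True), (0, True), (0, False), (4, True), (4, False), (4, False), (2, True)], [], [(2, False), (4, True), (4, True), (4, False), (0, True), (0, False), (2, False), (0, True), (0, True), (0, True)], [], [(2, False), (4, True), (4, True)]],
   [[], [(2, False), (4, True), (4, True), (4, False), (0, True), (0, False), (2, False), (0, True), (0, True), (0, True), (1, True), (0, False), (0, False), (0, False), (2, True), (0, True), (0, False), (4, True), (4, False), (4, False), (2, True)], [], [(2, False), (4, True), (4, True), (4, False), (0, True), (0, False), (2, False), (0, True), (0, False), (4, True), (4, False), (0, True), (2, True)], [], [(2, False), (4, True), (4, True), (4, False), (0, True), (0, False), (2, False), (0, True), (0, False), (4, True)]],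
   [[], [(3, False)], [], [], [], [(2, False), (4, True), (4, True)]],
   [[], [(3, False)], [], [(2, False), (4, True), (4, True), (4, False), (0, True), (0, False), (2, False), (0, True), (0, False), (4, True), (2, True)], [], [(2, False), (4, True), (4, True), (4, False), (0, True), (0, False), (2, False), (0, True), (0, False), (4, True)]],
   [[], [(2, False), (4, True), (4, True), (4, False), (0, True), (0, False), (2, False), (0, True), (0, True), (0, True), (1, False), (0, False), (0, False), (0, False), (2, True), (0, True), (0, False), (4, True), (4, False), (4, False), (2, True)], [], [(2, False), (4, True), (4, True), (4, False), (0, True), (0, False), (2, False), (0, True), (0, True), (0, True)], [], [(2, False), (4, True), (4, True)]],
   [[], [(2, False), (4, True), (4, True), (4, False), (0, True), (0, False), (2, False), (0, True), (0, True), (0, True), (1, False), (0, False), (0, False), (0, False), (2, True), (0, True), (0, False), (4, True), (4, False), (4, False), (2, True)], [], [(2, False), (4, True), (4, True), (4, False), (0, True), (0, False), (2, False), (0, True), (0, False), (4, True), (4, False), (0, True), (2, True)], [], [(2, False), (4, True), (4, True), (4, False), (0, True), (0, False), (2, False), (0, True), (0, False), (4, True)]]]"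

definition T1tab :: "nat pword list" where
  "T1tab = [[],
   [(5, False)],
   [(3, False)],
   [(3, False), (5, False)],
   [(1, False)],
   [(1, False), (5, False)],
   [(1, False), (3, False)],
   [(1, False), (3, False), (5, False)],
   [(5, False), (6, False)],
   [(5, False), (6, False), (5, False)],
   [(5, False), (6, False), (3, False)],
   [(5, False), (6, False), (3, False), (5, False)],
   [(5, False), (6, False), (1, False)],
   [(5, False), (6, False), (1, False), (5, False)],
   [(5, False), (6, False), (1, False), (3, False)],
   [(5, False), (6, False), (1, False), (3, False), (5, False)],
   [(3, False), (4, False)],
   [(3, False), (4, False), (5, False)],
   [(3, False), (4, False), (3, False)],
   [(3, False), (4, False), (3, False), (5, False)],
   [(3, False), (4, False), (1, False)],
   [(3, False), (4, False), (1, False), (5, False)],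
   [(3, False), (4, False), (1, False), (3, False)],
   [(3, False), (4, False), (1, False), (3, False), (5, False)],
   [(5, False), (6, False), (3, False), (4, False)],
   [(5, False), (6, False), (3, False), (4, False), (5, False)],
   [(5, False), (6, False), (3, False), (4, False), (3, False)],
   [(5, False), (6, False), (3, False), (4, False), (3, False), (5, False)],
   [(5, False), (6, False), (3, False), (4, False), (1, False)],
   [(5, False), (6, False), (3, False), (4, False), (1, False), (5, False)],
   [(5, False), (6, False), (3, False), (4, False), (1, False), (3, False)],
   [(5, False), (6, False), (3, False), (4, False), (1, False), (3, False), (5, False)]]"

definition P2tab :: "nat list list" where
  "P2tab = [[1, 0, 0, 0, 1],
   [0, 1, 1, 1, 0]]"

definition L2tab :: "nat pword list list" where
  "L2tab = [[[], [(1, False), (2, False)], [(5, False), (6, False), (5, False), (6, False)], [(3, False), (4, False), (1, False), (2, False), (4, True), (3, True)], [(3, False), (4, False), (3, False), (4, False)]],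
   [[(5, False), (6, False), (4, True), (3, True), (5, False), (6, False), (3, False), (4, False)], [(1, False), (2, False)], [(4, True), (3, True), (5, False), (6, False), (5, False), (6, False), (3, False), (4, False)], [(4, True), (3, True), (1, False), (2, False), (3, False), (4, False)], [(4, True), (3, True), (5, False), (6, False), (4, True), (3, True), (5, False), (6, False)]]]"

definition T2tab :: "nat pword list" where
  "T2tab = [[],
   [(0, False)]]"

definition p1 :: "nat \<Rightarrow> nat \<Rightarrow> nat" where
  "p1 d g = (if d < 32 \<and> 1 \<le> g \<and> g \<le> 6 then P1tab ! d ! (g - 1) else d)"
definition l1 :: "nat \<Rightarrow> nat \<Rightarrow> nat pword" where
  "l1 d g = (if d < 32 \<and> 1 \<le> g \<and> g \<le> 6 then L1tab ! d ! (g - 1) else [])"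
definition t1 :: "nat \<Rightarrow> nat pword" where
  "t1 d = (if d < 32 then T1tab ! d else [])"
definition p2 :: "nat \<Rightarrow> nat \<Rightarrow> nat" where
  "p2 d g = (if d < 2 \<and> g \<le> 4 then P2tab ! d ! g else d)"
definition l2 :: "nat \<Rightarrow> nat \<Rightarrow> nat pword" where
  "l2 d g = (if d < 2 \<and> g \<le> 4 then L2tab ! d ! g else [])"
definition t2 :: "nat \<Rightarrow> nat pword" where
  "t2 d = (if d < 2 then T2tab ! d else [])"

definition cm1 :: "nat \<times> bool \<Rightarrow> nat \<times> bool \<Rightarrow> bool" where
  "cm1 x y = (fst x = fst y \<or> (1 \<le> fst x \<and> fst x \<le> 6 \<and> 1 \<le> fst y \<and> fst y \<le> 6 \<and>
      (fst x + 2 \<le> fst y \<or> fst y + 2 \<le> fst x)))"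
definition cn1 :: "nat \<times> bool \<Rightarrow> nat \<times> bool \<Rightarrow> bool" where
  "cn1 x y = (fst x = fst y \<and> (snd x \<noteq> snd y \<or> (1 \<le> fst x \<and> fst x \<le> 6)))"
definition cm2 :: "nat \<times> bool \<Rightarrow> nat \<times> bool \<Rightarrow> bool" where
  "cm2 x y = (fst x = fst y \<or> (fst x \<le> 4 \<and> fst y \<le> 4 \<and> (fst x + 1 = fst y \<or> fst y + 1 = fst x)))"
definition cn2 :: "nat \<times> bool \<Rightarrow> nat \<times> bool \<Rightarrow> bool" where
  "cn2 x y = (fst x = fst y \<and> snd x \<noteq> snd y)"

definition R1list :: "nat pword list" where
  "R1list = [[((Suc 0), False), ((Suc 0), False)], [(2, False), (2, False)], [(3, False), (3, False)], [(4, False), (4, False)], [(5, False), (5, False)], [(6, False), (6, False)], [((Suc 0), False), (3, False), ((Suc 0), True), (3, True)], [((Suc 0), False), (4, False), ((Suc 0), True), (4, True)], [((Suc 0), False), (5, False), ((Suc 0), True), (5, True)], [((Suc 0), False), (6, False), ((Suc 0), True), (6, True)], [(2, False), (4, False), (2, True), (4, True)], [(2, False), (5, False), (2, True), (5, True)], [(2, False), (6, False), (2, True), (6, True)], [(3, False), ((Suc 0), False), (3, True), ((Suc 0), True)], [(3, False), (5, False), (3, True), (5, True)], [(3, False), (6, False), (3, True), (6, True)], [(4, False), ((Suc 0), False), (4, True), ((Suc 0), True)], [(4, False), (2, False), (4, True), (2, True)], [(4, False), (6, False), (4, True), (6, True)], [(5, False), ((Suc 0), False), (5, True), ((Suc 0),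 True)], [(5, False), (2, False), (5, True), (2, True)], [(5, False), (3, False), (5, True), (3, True)], [(6, False), ((Suc 0), False), (6, True), ((Suc 0), True)], [(6, False), (2, False), (6, True), (2, True)], [(6, False), (3, False), (6, True), (3, True)], [(6, False), (4, False), (6, True), (4, True)]]"

definition R2list :: "nat pword list" where
  "R2list = [[(0, False), ((Suc 0), False), (0, True), ((Suc 0), True)], [((Suc 0), False), (2, False), ((Suc 0), True), (2, True)], [(2, False), (3, False), (2, True), (3, True)], [(3, False), (4, False), (3, True), (4, True)]]"
lemma p1_pts[simp]:
  "p1 0 (Suc 0) = 4"
  "p1 0 2 = 4"
  "p1 0 3 = 2"
  "p1 0 4 = 18"
  "p1 0 5 = (Suc 0)"
  "p1 0 6 = 9"
  "p1 (Suc 0) (Suc 0) = 5"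
  "p1 (Suc 0) 2 = 5"
  "p1 (Suc 0) 3 = 3"
  "p1 (Suc 0) 4 = 19"
  "p1 (Suc 0) 5 = 0"
  "p1 (Suc 0) 6 = 8"
  "p1 2 (Suc 0) = 6"
  "p1 2 2 = 6"
  "p1 2 3 = 0"
  "p1 2 4 = 16"
  "p1 2 5 = 3"
  "p1 2 6 = 11"
  "p1 3 (Suc 0) = 7"
  "p1 3 2 = 7"
  "p1 3 3 = (Suc 0)"
  "p1 3 4 = 17"
  "p1 3 5 = 2"
  "p1 3 6 = 10"
  "p1 4 (Suc 0) = 0"
  "p1 4 2 = 0"
  "p1 4 3 = 6"
  "p1 4 4 = 22"
  "p1 4 5 = 5"
  "p1 4 6 = 13"
  "p1 5 (Suc 0) = (Suc 0)"
  "p1 5 2 = (Suc 0)"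
  "p1 5 3 = 7"
  "p1 5 4 = 23"
  "p1 5 5 = 4"
  "p1 5 6 = 12"
  "p1 6 (Suc 0) = 2"
  "p1 6 2 = 2"
  "p1 6 3 = 4"
  "p1 6 4 = 20"
  "p1 6 5 = 7"
  "p1 6 6 = 15"
  "p1 7 (Suc 0) = 3"
  "p1 7 2 = 3"
  "p1 7 3 = 5"
  "p1 7 4 = 21"
  "p1 7 5 = 6"
  "p1 7 6 = 14"
  "p1 8 (Suc 0) = 12"
  "p1 8 2 = 12"
  "p1 8 3 = 10"
  "p1 8 4 = 26"
  "p1 8 5 = 9"
  "p1 8 6 = (Suc 0)"
  "p1 9 (Suc 0) = 13"
  "p1 9 2 = 13"
  "p1 9 3 = 11"
  "p1 9 4 = 27"
  "p1 9 5 = 8"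
  "p1 9 6 = 0"
  "p1 10 (Suc 0) = 14"
  "p1 10 2 = 14"
  "p1 10 3 = 8"
  "p1 10 4 = 24"
  "p1 10 5 = 11"
  "p1 10 6 = 3"
  "p1 11 (Suc 0) = 15"
  "p1 11 2 = 15"
  "p1 11 3 = 9"
  "p1 11 4 = 25"
  "p1 11 5 = 10"
  "p1 11 6 = 2"
  "p1 12 (Suc 0) = 8"
  "p1 12 2 = 8"
  "p1 12 3 = 14"
  "p1 12 4 = 30"
  "p1 12 5 = 13"
  "p1 12 6 = 5"
  "p1 13 (Suc 0) = 9"
  "p1 13 2 = 9"
  "p1 13 3 = 15"
  "p1 13 4 = 31"
  "p1 13 5 = 12"
  "p1 13 6 = 4"
  "p1 14 (Suc 0) = 10"
  "p1 14 2 = 10"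
  "p1 14 3 = 12"
  "p1 14 4 = 28"
  "p1 14 5 = 15"
  "p1 14 6 = 7"
  "p1 15 (Suc 0) = 11"
  "p1 15 2 = 11"
  "p1 15 3 = 13"
  "p1 15 4 = 29"
  "p1 15 5 = 14"
  "p1 15 6 = 6"
  "p1 16 (Suc 0) = 20"
  "p1 16 2 = 20"
  "p1 16 3 = 18"
  "p1 16 4 = 2"
  "p1 16 5 = 17"
  "p1 16 6 = 25"
  "p1 17 (Suc 0) = 21"
  "p1 17 2 = 21"
  "p1 17 3 = 19"
  "p1 17 4 = 3"
  "p1 17 5 = 16"
  "p1 17 6 = 24"
  "p1 18 (Suc 0) = 22"
  "p1 18 2 = 22"
  "p1 18 3 = 16"
  "p1 18 4 = 0"
  "p1 18 5 = 19"
  "p1 18 6 = 27"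
  "p1 19 (Suc 0) = 23"
  "p1 19 2 = 23"
  "p1 19 3 = 17"
  "p1 19 4 = (Suc 0)"
  "p1 19 5 = 18"
  "p1 19 6 = 26"
  "p1 20 (Suc 0) = 16"
  "p1 20 2 = 16"
  "p1 20 3 = 22"
  "p1 20 4 = 6"
  "p1 20 5 = 21"
  "p1 20 6 = 29"
  "p1 21 (Suc 0) = 17"
  "p1 21 2 = 17"
  "p1 21 3 = 23"
  "p1 21 4 = 7"
  "p1 21 5 = 20"
  "p1 21 6 = 28"
  "p1 22 (Suc 0) = 18"
  "p1 22 2 = 18"
  "p1 22 3 = 20"
  "p1 22 4 = 4"
  "p1 22 5 = 23"
  "p1 22 6 = 31"
  "p1 23 (Suc 0) = 19"
  "p1 23 2 = 19"
  "p1 23 3 = 21"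
  "p1 23 4 = 5"
  "p1 23 5 = 22"
  "p1 23 6 = 30"
  "p1 24 (Suc 0) = 28"
  "p1 24 2 = 28"
  "p1 24 3 = 26"
  "p1 24 4 = 10"
  "p1 24 5 = 25"
  "p1 24 6 = 17"
  "p1 25 (Suc 0) = 29"
  "p1 25 2 = 29"
  "p1 25 3 = 27"
  "p1 25 4 = 11"
  "p1 25 5 = 24"
  "p1 25 6 = 16"
  "p1 26 (Suc 0) = 30"
  "p1 26 2 = 30"
  "p1 26 3 = 24"
  "p1 26 4 = 8"
  "p1 26 5 = 27"
  "p1 26 6 = 19"
  "p1 27 (Suc 0) = 31"
  "p1 27 2 = 31"
  "p1 27 3 = 25"
  "p1 27 4 = 9"
  "p1 27 5 = 26"
  "p1 27 6 = 18"
  "p1 28 (Suc 0) = 24"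
  "p1 28 2 = 24"
  "p1 28 3 = 30"
  "p1 28 4 = 14"
  "p1 28 5 = 29"
  "p1 28 6 = 21"
  "p1 29 (Suc 0) = 25"
  "p1 29 2 = 25"
  "p1 29 3 = 31"
  "p1 29 4 = 15"
  "p1 29 5 = 28"
  "p1 29 6 = 20"
  "p1 30 (Suc 0) = 26"
  "p1 30 2 = 26"
  "p1 30 3 = 28"
  "p1 30 4 = 12"
  "p1 30 5 = 31"
  "p1 30 6 = 23"
  "p1 31 (Suc 0) = 27"
  "p1 31 2 = 27"
  "p1 31 3 = 29"
  "p1 31 4 = 13"
  "p1 31 5 = 30"
  "p1 31 6 = 22"
  by (simp_all add: p1_def P1tab_def)

lemma l1_pts[simp]:
  "l1 0 (Suc 0) = []"
  "l1 0 2 = [((Suc 0), True)]"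
  "l1 0 3 = []"
  "l1 0 4 = [(0, False), (4, True)]"
  "l1 0 5 = []"
  "l1 0 6 = [(2, True)]"
  "l1 (Suc 0) (Suc 0) = []"
  "l1 (Suc 0) 2 = [((Suc 0), True)]"
  "l1 (Suc 0) 3 = []"
  "l1 (Suc 0) 4 = [(0, False), (0, False), (0, False), (2, True), (0, True), (0, False), (4, True), (4, False), (4, False), (2, True), (2, False), (4, True), (4, True)]"
  "l1 (Suc 0) 5 = []"
  "l1 (Suc 0) 6 = []"
  "l1 2 (Suc 0) = []"
  "l1 2 2 = [(3, True)]"
  "l1 2 3 = []"
  "l1 2 4 = []"
  "l1 2 5 = []"
  "l1 2 6 = [(2, True)]"
  "l1 3 (Suc 0) = []"
  "l1 3 2 = [(3, True)]"
  "l1 3 3 = []"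
  "l1 3 4 = [(2, False), (4, True), (4, True)]"
  "l1 3 5 = []"
  "l1 3 6 = []"
  "l1 4 (Suc 0) = []"
  "l1 4 2 = [((Suc 0), False)]"
  "l1 4 3 = []"
  "l1 4 4 = [(0, False), (4, True)]"
  "l1 4 5 = []"
  "l1 4 6 = [(2, True)]"
  "l1 5 (Suc 0) = []"
  "l1 5 2 = [((Suc 0), False)]"
  "l1 5 3 = []"
  "l1 5 4 = [(0, False), (0, False), (0, False), (2, True), (0, True), (0, False), (4, True), (4, False), (4, False), (2, True), (2, False), (4, True), (4, True)]"
  "l1 5 5 = []"
  "l1 5 6 = []"
  "l1 6 (Suc 0) = []"
  "l1 6 2 = [(3, False)]"
  "l1 6 3 = []"
  "l1 6 4 = []"
  "l1 6 5 = []"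
  "l1 6 6 = [(2, True)]"
  "l1 7 (Suc 0) = []"
  "l1 7 2 = [(3, False)]"
  "l1 7 3 = []"
  "l1 7 4 = [(2, False), (4, True), (4, True)]"
  "l1 7 5 = []"
  "l1 7 6 = []"
  "l1 8 (Suc 0) = []"
  "l1 8 2 = [((Suc 0), True)]"
  "l1 8 3 = []"
  "l1 8 4 = [(0, False), (0, False), (0, False), (2, True), (0, True), (0, False), (4, True), (4, False), (4, False), (2, True)]"
  "l1 8 5 = []"
  "l1 8 6 = []"
  "l1 9 (Suc 0) = []"
  "l1 9 2 = [((Suc 0), True)]"
  "l1 9 3 = []"
  "l1 9 4 = [(2, False), (0, False), (4, True), (4, False), (0, True), (0, False), (2, True), (0, True), (0, False), (4, True), (4, False), (4, False), (2, True)]"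
  "l1 9 5 = []"
  "l1 9 6 = [(2, False)]"
  "l1 10 (Suc 0) = []"
  "l1 10 2 = [(3, True)]"
  "l1 10 3 = []"
  "l1 10 4 = []"
  "l1 10 5 = []"
  "l1 10 6 = []"
  "l1 11 (Suc 0) = []"
  "l1 11 2 = [(3, True)]"
  "l1 11 3 = []"
  "l1 11 4 = [(2, False), (4, False), (0, True), (0, False), (2, True), (0, True), (0, False), (4, True), (4, False), (4, False), (2, True)]"
  "l1 11 5 = []"
  "l1 11 6 = [(2, False)]"
  "l1 12 (Suc 0) = []"
  "l1 12 2 = [((Suc 0), False)]"
  "l1 12 3 = []"
  "l1 12 4 = [(0, False), (0, False), (0, False), (2, True), (0, True), (0, False), (4, True), (4, False), (4, False), (2, True)]"
  "l1 12 5 = []"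
  "l1 12 6 = []"
  "l1 13 (Suc 0) = []"
  "l1 13 2 = [((Suc 0), False)]"
  "l1 13 3 = []"
  "l1 13 4 = [(2, False), (0, False), (4, True), (4, False), (0, True), (0, False), (2, True), (0, True), (0, False), (4, True), (4, False), (4, False), (2, True)]"
  "l1 13 5 = []"
  "l1 13 6 = [(2, False)]"
  "l1 14 (Suc 0) = []"
  "l1 14 2 = [(3, False)]"
  "l1 14 3 = []"
  "l1 14 4 = []"
  "l1 14 5 = []"
  "l1 14 6 = []"
  "l1 15 (Suc 0) = []"
  "l1 15 2 = [(3, False)]"
  "l1 15 3 = []"
  "l1 15 4 = [(2, False), (4, False), (0, True), (0, False), (2, True), (0, True), (0, False), (4, True), (4, False), (4, False), (2, True)]"
  "l1 15 5 = []"
  "l1 15 6 = [(2, False)]"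
  "l1 16 (Suc 0) = []"
  "l1 16 2 = [(3, True)]"
  "l1 16 3 = []"
  "l1 16 4 = []"
  "l1 16 5 = []"
  "l1 16 6 = [(4, False), (0, True), (0, False), (2, True), (0, True), (0, False), (4, True), (4, False), (4, False), (2, True)]"
  "l1 17 (Suc 0) = []"
  "l1 17 2 = [(3, True)]"
  "l1 17 3 = []"
  "l1 17 4 = [(4, False), (4, False), (2, True)]"
  "l1 17 5 = []"
  "l1 17 6 = [(4, False), (4, False), (2, True)]"
  "l1 18 (Suc 0) = []"
  "l1 18 2 = [(4, False), (0, True), ((Suc 0), True), (0, False), (4, True)]"
  "l1 18 3 = []"
  "l1 18 4 = [(4, False), (0, True)]"
  "l1 18 5 = []"
  "l1 18 6 = [(4, False), (0, True), (0, False), (2, True), (0, True), (0, False), (4, True), (4, False), (4, False), (2, True)]"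
  "l1 19 (Suc 0) = []"
  "l1 19 2 = [(4, False), (0, True), ((Suc 0), True), (0, False), (4, True)]"
  "l1 19 3 = []"
  "l1 19 4 = [(4, False), (4, False), (2, True), (2, False), (4, True), (4, True), (4, False), (0, True), (0, False), (2, False), (0, True), (0, True), (0, True)]"
  "l1 19 5 = []"
  "l1 19 6 = [(4, False), (4, False), (2, True)]"
  "l1 20 (Suc 0) = []"
  "l1 20 2 = [(3, False)]"
  "l1 20 3 = []"
  "l1 20 4 = []"
  "l1 20 5 = []"
  "l1 20 6 = [(4, False), (0, True), (0, False), (2, True), (0, True), (0, False), (4, True), (4, False), (4, False), (2, True)]"
  "l1 21 (Suc 0) = []"
  "l1 21 2 = [(3, False)]"
  "l1 21 3 = []"
  "l1 21 4 = [(4, False), (4, False), (2, True)]"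
  "l1 21 5 = []"
  "l1 21 6 = [(4, False), (4, False), (2, True)]"
  "l1 22 (Suc 0) = []"
  "l1 22 2 = [(4, False), (0, True), ((Suc 0), False), (0, False), (4, True)]"
  "l1 22 3 = []"
  "l1 22 4 = [(4, False), (0, True)]"
  "l1 22 5 = []"
  "l1 22 6 = [(4, False), (0, True), (0, False), (2, True), (0, True), (0, False), (4, True), (4, False), (4, False), (2, True)]"
  "l1 23 (Suc 0) = []"
  "l1 23 2 = [(4, False), (0, True), ((Suc 0), False), (0, False), (4, True)]"
  "l1 23 3 = []"
  "l1 23 4 = [(4, False), (4, False), (2, True), (2, False), (4, True), (4, True), (4, False), (0, True), (0, False), (2, False), (0, True), (0, True), (0, True)]"
  "l1 23 5 = []"
  "l1 23 6 = [(4, False), (4, False), (2, True)]"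
  "l1 24 (Suc 0) = []"
  "l1 24 2 = [(3, True)]"
  "l1 24 3 = []"
  "l1 24 4 = []"
  "l1 24 5 = []"
  "l1 24 6 = [(2, False), (4, True), (4, True)]"
  "l1 25 (Suc 0) = []"
  "l1 25 2 = [(3, True)]"
  "l1 25 3 = []"
  "l1 25 4 = [(2, False), (4, True), (4, True), (4, False), (0, True), (0, False), (2, False), (0, True), (0, False), (4, True), (2, True)]"
  "l1 25 5 = []"
  "l1 25 6 = [(2, False), (4, True), (4, True), (4, False), (0, True), (0, False), (2, False), (0, True), (0, False), (4, True)]"
  "l1 26 (Suc 0) = []"
  "l1 26 2 = [(2, False), (4, True), (4, True), (4, False), (0, True), (0, False), (2, False), (0, True), (0, True), (0, True), ((Suc 0), True), (0, False), (0, False), (0, False), (2, True), (0, True), (0, False), (4, True), (4, False), (4, False), (2, True)]"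
  "l1 26 3 = []"
  "l1 26 4 = [(2, False), (4, True), (4, True), (4, False), (0, True), (0, False), (2, False), (0, True), (0, True), (0, True)]"
  "l1 26 5 = []"
  "l1 26 6 = [(2, False), (4, True), (4, True)]"
  "l1 27 (Suc 0) = []"
  "l1 27 2 = [(2, False), (4, True), (4, True), (4, False), (0, True), (0, False), (2, False), (0, True), (0, True), (0, True), ((Suc 0), True), (0, False), (0, False), (0, False), (2, True), (0, True), (0, False), (4, True), (4, False), (4, False), (2, True)]"
  "l1 27 3 = []"
  "l1 27 4 = [(2, False), (4, True), (4, True), (4, False), (0, True), (0, False), (2, False), (0, True), (0, False), (4, True), (4, False), (0, True), (2, True)]"
  "l1 27 5 = []"
  "l1 27 6 = [(2, False), (4, True), (4, True), (4, False), (0, True), (0, False), (2, False), (0, True), (0, False), (4, True)]"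
  "l1 28 (Suc 0) = []"
  "l1 28 2 = [(3, False)]"
  "l1 28 3 = []"
  "l1 28 4 = []"
  "l1 28 5 = []"
  "l1 28 6 = [(2, False), (4, True), (4, True)]"
  "l1 29 (Suc 0) = []"
  "l1 29 2 = [(3, False)]"
  "l1 29 3 = []"
  "l1 29 4 = [(2, False), (4, True), (4, True), (4, False), (0, True), (0, False), (2, False), (0, True), (0, False), (4, True), (2, True)]"
  "l1 29 5 = []"
  "l1 29 6 = [(2, False), (4, True), (4, True), (4, False), (0, True), (0, False), (2, False), (0, True), (0, False), (4, True)]"
  "l1 30 (Suc 0) = []"
  "l1 30 2 = [(2, False), (4, True), (4, True), (4, False), (0, True), (0, False), (2, False), (0, True), (0, True), (0, True), ((Suc 0), False), (0, False), (0, False), (0, False), (2, True), (0, True), (0, False), (4, True), (4, False), (4, False), (2, True)]"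
  "l1 30 3 = []"
  "l1 30 4 = [(2, False), (4, True), (4, True), (4, False), (0, True), (0, False), (2, False), (0, True), (0, True), (0, True)]"
  "l1 30 5 = []"
  "l1 30 6 = [(2, False), (4, True), (4, True)]"
  "l1 31 (Suc 0) = []"
  "l1 31 2 = [(2, False), (4, True), (4, True), (4, False), (0, True), (0, False), (2, False), (0, True), (0, True), (0, True), ((Suc 0), False), (0, False), (0, False), (0, False), (2, True), (0, True), (0, False), (4, True), (4, False), (4, False), (2, True)]"
  "l1 31 3 = []"
  "l1 31 4 = [(2, False), (4, True), (4, True), (4, False), (0, True), (0, False), (2, False), (0, True), (0, False), (4, True), (4, False), (0, True), (2, True)]"
  "l1 31 5 = []"
  "l1 31 6 = [(2, False), (4, True), (4, True), (4, False), (0, True), (0, False), (2, False), (0, True), (0, False), (4, True)]"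
  by (simp_all add: l1_def L1tab_def)

lemma t1_pts[simp]:
  "t1 0 = []"
  "t1 (Suc 0) = [(5, False)]"
  "t1 2 = [(3, False)]"
  "t1 3 = [(3, False), (5, False)]"
  "t1 4 = [((Suc 0), False)]"
  "t1 5 = [((Suc 0), False), (5, False)]"
  "t1 6 = [((Suc 0), False), (3, False)]"
  "t1 7 = [((Suc 0), False), (3, False), (5, False)]"
  "t1 8 = [(5, False), (6, False)]"
  "t1 9 = [(5, False), (6, False), (5, False)]"
  "t1 10 = [(5, False), (6, False), (3, False)]"
  "t1 11 = [(5, False), (6, False), (3, False), (5, False)]"
  "t1 12 = [(5, False), (6, False), ((Suc 0), False)]"
  "t1 13 = [(5, False), (6, False), ((Suc 0), False), (5, False)]"
  "t1 14 = [(5, False), (6, False), ((Suc 0), False), (3, False)]"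
  "t1 15 = [(5, False), (6, False), ((Suc 0), False), (3, False), (5, False)]"
  "t1 16 = [(3, False), (4, False)]"
  "t1 17 = [(3, False), (4, False), (5, False)]"
  "t1 18 = [(3, False), (4, False), (3, False)]"
  "t1 19 = [(3, False), (4, False), (3, False), (5, False)]"
  "t1 20 = [(3, False), (4, False), ((Suc 0), False)]"
  "t1 21 = [(3, False), (4, False), ((Suc 0), False), (5, False)]"
  "t1 22 = [(3, False), (4, False), ((Suc 0), False), (3, False)]"
  "t1 23 = [(3, False), (4, False), ((Suc 0), False), (3, False), (5, False)]"
  "t1 24 = [(5, False), (6, False), (3, False), (4, False)]"
  "t1 25 = [(5, False), (6, False), (3, False), (4, False), (5, False)]"
  "t1 26 = [(5, False), (6, False), (3, False), (4, False), (3, False)]"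
  "t1 27 = [(5, False), (6, False), (3, False), (4, False), (3, False), (5, False)]"
  "t1 28 = [(5, False), (6, False), (3, False), (4, False), ((Suc 0), False)]"
  "t1 29 = [(5, False), (6, False), (3, False), (4, False), ((Suc 0), False), (5, False)]"
  "t1 30 = [(5, False), (6, False), (3, False), (4, False), ((Suc 0), False), (3, False)]"
  "t1 31 = [(5, False), (6, False), (3, False), (4, False), ((Suc 0), False), (3, False), (5, False)]"
  by (simp_all add: t1_def T1tab_def)

lemma p2_pts[simp]:
  "p2 0 0 = (Suc 0)"
  "p2 0 (Suc 0) = 0"
  "p2 0 2 = 0"
  "p2 0 3 = 0"
  "p2 0 4 = (Suc 0)"
  "p2 (Suc 0) 0 = 0"
  "p2 (Suc 0) (Suc 0) = (Suc 0)"
  "p2 (Suc 0) 2 = (Suc 0)"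
  "p2 (Suc 0) 3 = (Suc 0)"
  "p2 (Suc 0) 4 = 0"
  by (simp_all add: p2_def P2tab_def)

lemma l2_pts[simp]:
  "l2 0 0 = []"
  "l2 0 (Suc 0) = [((Suc 0), False), (2, False)]"
  "l2 0 2 = [(5, False), (6, False), (5, False), (6, False)]"
  "l2 0 3 = [(3, False), (4, False), ((Suc 0), False), (2, False), (4, True), (3, True)]"
  "l2 0 4 = [(3, False), (4, False), (3, False), (4, False)]"
  "l2 (Suc 0) 0 = [(5, False), (6, False), (4, True), (3, True), (5, False), (6, False), (3, False), (4, False)]"
  "l2 (Suc 0) (Suc 0) = [((Suc 0), False), (2, False)]"
  "l2 (Suc 0) 2 = [(4, True), (3, True), (5, False), (6, False), (5, False), (6, False), (3, False), (4, False)]"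
  "l2 (Suc 0) 3 = [(4, True), (3, True), ((Suc 0), False), (2, False), (3, False), (4, False)]"
  "l2 (Suc 0) 4 = [(4, True), (3, True), (5, False), (6, False), (4, True), (3, True), (5, False), (6, False)]"
  by (simp_all add: l2_def L2tab_def)

lemma t2_pts[simp]:
  "t2 0 = []"
  "t2 (Suc 0) = [(0, False)]"
  by (simp_all add: t2_def T2tab_def)

definition RF :: "nat pword set" where
  "RF = {[(i, False), (i, False)] | i. i \<in> {1..6}} \<union>
      {commutator_word i j | i j. i \<in> {1..6} \<and> j \<in> {1..6} \<and> (i + 2 \<le> j \<or> j + 2 \<le> i)}"

definition RA :: "nat pword set" where
  "RA = {commutator_word i (i + 1) | i. i \<in> {0..3}}"

definition D32L :: "nat list" where "D32L = [0, Suc 0, 2, 3] @ [4, 5, 6, 7] @ [8, 9, 10, 11] @ [12, 13, 14, 15] @ [16, 17, 18, 19] @ [20, 21, 22, 23] @ [24, 25, 26, 27] @ [28, 29, 30, 31]"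
definition G6L :: "nat list" where "G6L = [Suc 0, 2, 3, 4, 5, 6]"
definition D2L :: "nat list" where "D2L = [0, Suc 0]"
definition G5L :: "nat list" where "G5L = [0, Suc 0, 2, 3, 4]"

lemma D32: "d < 32 \<Longrightarrow> d \<in> set D32L"
proof -
  have "[0..<32] = D32L" by (simp add: upt_rec D32L_def)
  moreover assume "d < 32"
  ultimately show ?thesis by (metis atLeastLessThan_iff set_upt zero_le)
qed

lemma G6: "1 \<le> g \<Longrightarrow> g \<le> 6 \<Longrightarrow> g \<in> set G6L"
proof -
  have "[1..<7] = G6L" by (simp add: upt_rec G6L_def)
  moreover assume "1 \<le> g" "g \<le> 6"
  ultimately show ?thesis by (metis atLeastLessThan_iff set_upt less_Suc_eq_le numeral_Bit1 numeral_One one_add_one numeral_plus_one eval_nat_numeral(3))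
qed

lemma D2: "d < 2 \<Longrightarrow> d \<in> set D2L" by (auto simp: D2L_def)
lemma G5: "g \<le> 4 \<Longrightarrow> g \<in> set G5L" by (auto simp: G5L_def)

lemma RF_sub: "r \<in> RF \<Longrightarrow> r \<in> set R1list"
proof -
  have A: "\<forall>i\<in>set G6L. [(i, False), (i, False)] \<in> set R1list"
    by (simp add: G6L_def R1list_def)
  have B: "\<forall>i\<in>set G6L. \<forall>j\<in>set G6L. i + 2 \<le> j \<or> j + 2 \<le> i \<longrightarrow> commutator_word i j \<in> set R1list"
    by (simp add: G6L_def R1list_def commutator_word_def)
  assume "r \<in> RF"
  then obtain i j where "(r = [(i, False), (i, False)] \<and> 1 \<le> i \<and> i \<le> 6) \<or>
     (r = commutator_word i j \<and> 1 \<le> i \<and> i \<le> 6 \<and> 1 \<le> j \<and> j \<le> 6 \<and> (i + 2 \<le> j \<or> j + 2 \<le> i))"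
    unfolding RF_def by auto
  then show ?thesis using A B G6 by blast
qed

lemma RA_sub: "r \<in> RA \<Longrightarrow> r \<in> set R2list"
  unfolding RA_def R2list_def commutator_word_def
  by (auto simp: numeral_eq_Suc le_Suc_eq)

lemma chk_inv1: "list_all (\<lambda>d. list_all (\<lambda>g. p1 (p1 d g) g = d \<and> p1 d g < 32) G6L) D32L"
  by (simp add: G6L_def D32L_def)

lemma chk_inv2: "list_all (\<lambda>d. list_all (\<lambda>g. p2 (p2 d g) g = d \<and> p2 d g < 2) G5L) D2L"
  by (simp add: G5L_def D2L_def)

lemma chk_cl1: "list_all (\<lambda>d. list_all (\<lambda>g. tend p2 0 (l1 d g) = 0 \<and> list_all (\<lambda>x. fst x \<le> 4) (l1 d g)) G6L) D32L"
  by (simp add: G6L_def D32L_def)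

lemma chk_cl2: "list_all (\<lambda>d. list_all (\<lambda>g. tend p1 0 (l2 d g) = 0 \<and> list_all (\<lambda>x. 1 \<le> fst x \<and> fst x \<le> 6) (l2 d g)) G5L) D2L"
  by (simp add: G5L_def D2L_def)

lemma chk_rel2: "list_all (\<lambda>d. list_all (\<lambda>r. tend p2 d r = d \<and> red cm1 cn1 (tout p2 l2 d r) = []) R2list) D2L"
  by (simp add: D2L_def R2list_def lab_def red_def cm1_def cn1_def)

lemma chk_back2: "list_all (\<lambda>d. list_all (\<lambda>g. red cm2 cn2 (tout p1 l1 0 (l2 d g) @ inv_pword (t2 d @ [(g, False)] @ inv_pword (t2 (p2 d g)))) = []) G5L) D2L"
  by (simp add: G5L_def D2L_def lab_def red_def cm2_def cn2_def)

lemma chk_rel1_0: "list_all (\<lambda>d. list_all (\<lambda>r. tend p1 d r = d \<and> red cm2 cn2 (tout p1 l1 d r) = []) R1list) [0, Suc 0, 2, 3]"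
  by (simp add: R1list_def lab_def red_def cm2_def cn2_def)

lemma chk_rel1_1: "list_all (\<lambda>d. list_all (\<lambda>r. tend p1 d r = d \<and> red cm2 cn2 (tout p1 l1 d r) = []) R1list) [4, 5, 6, 7]"
  by (simp add: R1list_def lab_def red_def cm2_def cn2_def)

lemma chk_rel1_2: "list_all (\<lambda>d. list_all (\<lambda>r. tend p1 d r = d \<and> red cm2 cn2 (tout p1 l1 d r) = []) R1list) [8, 9, 10, 11]"
  by (simp add: R1list_def lab_def red_def cm2_def cn2_def)

lemma chk_rel1_3: "list_all (\<lambda>d. list_all (\<lambda>r. tend p1 d r = d \<and> red cm2 cn2 (tout p1 l1 d r) = []) R1list) [12, 13, 14, 15]"
  by (simp add: R1list_def lab_def red_def cm2_def cn2_def)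

lemma chk_rel1_4: "list_all (\<lambda>d. list_all (\<lambda>r. tend p1 d r = d \<and> red cm2 cn2 (tout p1 l1 d r) = []) R1list) [16, 17, 18, 19]"
  by (simp add: R1list_def lab_def red_def cm2_def cn2_def)

lemma chk_rel1_5: "list_all (\<lambda>d. list_all (\<lambda>r. tend p1 d r = d \<and> red cm2 cn2 (tout p1 l1 d r) = []) R1list) [20, 21, 22, 23]"
  by (simp add: R1list_def lab_def red_def cm2_def cn2_def)

lemma chk_rel1_6: "list_all (\<lambda>d. list_all (\<lambda>r. tend p1 d r = d \<and> red cm2 cn2 (tout p1 l1 d r) = []) R1list) [24, 25, 26, 27]"
  by (simp add: R1list_def lab_def red_def cm2_def cn2_def)

lemma chk_rel1_7: "list_all (\<lambda>d. list_all (\<lambda>r. tend p1 d r = d \<and> red cm2 cn2 (tout p1 l1 d r) = []) R1list) [28, 29, 30, 31]"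
  by (simp add: R1list_def lab_def red_def cm2_def cn2_def)


lemma chk_back1_0: "list_all (\<lambda>d. list_all (\<lambda>g. red cm1 cn1 (tout p2 l2 0 (l1 d g) @ inv_pword (t1 d @ [(g, False)] @ inv_pword (t1 (p1 d g)))) = []) G6L) [0, Suc 0, 2, 3]"
  by (simp add: G6L_def lab_def red_def cm1_def cn1_def)

lemma chk_back1_1: "list_all (\<lambda>d. list_all (\<lambda>g. red cm1 cn1 (tout p2 l2 0 (l1 d g) @ inv_pword (t1 d @ [(g, False)] @ inv_pword (t1 (p1 d g)))) = []) G6L) [4, 5, 6, 7]"
  by (simp add: G6L_def lab_def red_def cm1_def cn1_def)

lemma chk_back1_2: "list_all (\<lambda>d. list_all (\<lambda>g. red cm1 cn1 (tout p2 l2 0 (l1 d g) @ inv_pword (t1 d @ [(g, False)] @ inv_pword (t1 (p1 d g)))) = []) G6L) [8, 9, 10, 11]"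
  by (simp add: G6L_def lab_def red_def cm1_def cn1_def)

lemma chk_back1_3: "list_all (\<lambda>d. list_all (\<lambda>g. red cm1 cn1 (tout p2 l2 0 (l1 d g) @ inv_pword (t1 d @ [(g, False)] @ inv_pword (t1 (p1 d g)))) = []) G6L) [12, 13, 14, 15]"
  by (simp add: G6L_def lab_def red_def cm1_def cn1_def)

lemma chk_back1_4: "list_all (\<lambda>d. list_all (\<lambda>g. red cm1 cn1 (tout p2 l2 0 (l1 d g) @ inv_pword (t1 d @ [(g, False)] @ inv_pword (t1 (p1 d g)))) = []) G6L) [16, 17, 18, 19]"
  by (simp add: G6L_def lab_def red_def cm1_def cn1_def)

lemma chk_back1_5: "list_all (\<lambda>d. list_all (\<lambda>g. red cm1 cn1 (tout p2 l2 0 (l1 d g) @ inv_pword (t1 d @ [(g, False)] @ inv_pword (t1 (p1 d g)))) = []) G6L) [20, 21, 22, 23]"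
  by (simp add: G6L_def lab_def red_def cm1_def cn1_def)

lemma chk_back1_6: "list_all (\<lambda>d. list_all (\<lambda>g. red cm1 cn1 (tout p2 l2 0 (l1 d g) @ inv_pword (t1 d @ [(g, False)] @ inv_pword (t1 (p1 d g)))) = []) G6L) [24, 25, 26, 27]"
  by (simp add: G6L_def lab_def red_def cm1_def cn1_def)

lemma chk_back1_7: "list_all (\<lambda>d. list_all (\<lambda>g. red cm1 cn1 (tout p2 l2 0 (l1 d g) @ inv_pword (t1 d @ [(g, False)] @ inv_pword (t1 (p1 d g)))) = []) G6L) [28, 29, 30, 31]"
  by (simp add: G6L_def lab_def red_def cm1_def cn1_def)


lemma rel1_all: "\<forall>d\<in>set D32L. \<forall>r\<in>set R1list. tend p1 d r = d \<and> red cm2 cn2 (tout p1 l1 d r) = []"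
  unfolding D32L_def set_append ball_Un using chk_rel1_0 chk_rel1_1 chk_rel1_2 chk_rel1_3 chk_rel1_4 chk_rel1_5 chk_rel1_6 chk_rel1_7 unfolding list_all_iff by blast

lemma back1_all: "\<forall>d\<in>set D32L. \<forall>g\<in>set G6L. red cm1 cn1 (tout p2 l2 0 (l1 d g) @ inv_pword (t1 d @ [(g, False)] @ inv_pword (t1 (p1 d g)))) = []"
  unfolding D32L_def set_append ball_Un using chk_back1_0 chk_back1_1 chk_back1_2 chk_back1_3 chk_back1_4 chk_back1_5 chk_back1_6 chk_back1_7 unfolding list_all_iff by blast



lemma comm_all:
  assumes A: "pres_eq R [(i, False), (j, False)] [(j, False), (i, False)]"
  shows "pres_eq R [(i, s), (j, t)] [(j, t), (i, s)]"
proof -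
  have TF: "pres_eq R [(i, True), (j, False)] [(j, False), (i, True)]"
    using pres_eq_comm_inv[OF A] by simp
  have FT: "pres_eq R [(i, False), (j, True)] [(j, True), (i, False)]"
    using pres_eq_comm_inv[OF pres_sym[OF A]] by (simp add: pres_sym)
  have TT: "pres_eq R [(i, True), (j, True)] [(j, True), (i, True)]"
    using pres_eq_comm_inv[OF pres_sym[OF TF]] by (simp add: pres_sym)
  show ?thesis using A TF FT TT by (cases s; cases t) auto
qed

lemma cancel_pair:
  assumes "snd x \<noteq> snd y" "fst x = fst y"
  shows "pres_eq R [x, y] []"
proof -
  have "y = inv_letter x" using assms by (cases x, cases y) auto
  then show ?thesis using pres_cancel[of R "[]" x "[]"] by simp
qed

lemma cn1_sound: "cn1 x y \<Longrightarrow> pres_eq RF [x, y] []"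
proof -
  assume c: "cn1 x y"
  obtain i s j t where x: "x = (i, s)" and y: "y = (j, t)" by (cases x, cases y)
  show ?thesis
  proof (cases "s = t")
    case False show ?thesis
      by (rule cancel_pair) (use c x y False in \<open>auto simp: cn1_def\<close>)
  next
    case True
    have ij: "i = j" "1 \<le> i" "i \<le> 6" using c True x y by (auto simp: cn1_def)
    have r: "[(i, False), (i, False)] \<in> RF" using ij by (auto simp: RF_def)
    have F: "pres_eq RF [(i, False), (i, False)] []"
      using pres_rel[OF r, of "[]" "[]"] by simp
    have T: "pres_eq RF [(i, True), (i, True)] []"
      using pres_eq_inv[OF F] by simp
    show ?thesis using F T x y ij True by (cases t) auto
  qed
qed

lemma cm1_sound: "cm1 x y \<Longrightarrow> pres_eq RF [x, y] [y, x]"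
proof -
  assume c: "cm1 x y"
  obtain i s j t where x: "x = (i, s)" and y: "y = (j, t)" by (cases x, cases y)
  show ?thesis
  proof (cases "i = j")
    case True
    show ?thesis
    proof (cases "s = t")
      case True then show ?thesis using x y \<open>i = j\<close> by (simp add: pres_refl)
    next
      case False
      have "pres_eq RF [x, y] []" "pres_eq RF [y, x] []"
        by (rule cancel_pair; use False x y \<open>i = j\<close> in auto)+
      then show ?thesis by (meson pres_sym pres_trans)
    qed
  next
    case False
    then have rng: "i \<in> {1..6}" "j \<in> {1..6}" "i + 2 \<le> j \<or> j + 2 \<le> i"
      using c x y by (auto simp: cm1_def)
    then have r: "commutator_word i j \<in> RF" by (auto simp: RF_def)
    have "pres_eq RF [(i, False), (j, False), (i, True), (j, True)] []"
      using pres_rel[OF r, of "[]" "[]"] by (simp add: commutator_word_def)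
    then have "pres_eq RF [(i, False), (j, False)] [(j, False), (i, False)]"
      using pres_eq_comm_from_rel[of RF "(i, False)" "(j, False)"] by simp
    then show ?thesis using comm_all x y by simp
  qed
qed

lemma cn2_sound: "cn2 x y \<Longrightarrow> pres_eq RA [x, y] []"
  by (rule cancel_pair) (auto simp: cn2_def)

lemma cm2_sound: "cm2 x y \<Longrightarrow> pres_eq RA [x, y] [y, x]"
proof -
  assume c: "cm2 x y"
  obtain i s j t where x: "x = (i, s)" and y: "y = (j, t)" by (cases x, cases y)
  have key: "pres_eq RA [(k, False), (k + 1, False)] [(k + 1, False), (k, False)]" if "k \<le> 3" for k
  proof -
    have r: "commutator_word k (k + 1) \<in> RA" using that by (auto simp: RA_def)
    have "pres_eq RA [(k, False), (k + 1, False), (k, True), (k + 1, True)] []"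
      using pres_rel[OF r, of "[]" "[]"] by (simp add: commutator_word_def)
    then show ?thesis
      using pres_eq_comm_from_rel[of RA "(k, False)" "(k + 1, False)"] by simp
  qed
  show ?thesis
  proof (cases "i = j")
    case True
    show ?thesis
    proof (cases "s = t")
      case True then show ?thesis using x y \<open>i = j\<close> by (simp add: pres_refl)
    next
      case False
      have "pres_eq RA [x, y] []" "pres_eq RA [y, x] []"
        by (rule cancel_pair; use False x y \<open>i = j\<close> in auto)+
      then show ?thesis by (meson pres_sym pres_trans)
    qed
  next
    case False
    then have "(i \<le> 3 \<and> j = i + 1) \<or> (j \<le> 3 \<and> i = j + 1)"
      using c x y by (auto simp: cm2_def)
    then show ?thesis
    proof
      assume h: "i \<le> 3 \<and> j = i + 1"
      then show ?thesis using comm_all[OF key[of i]] x y by auto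
    next
      assume h: "j \<le> 3 \<and> i = j + 1"
      then show ?thesis using comm_all[OF key[of j], of t s] x y by (auto intro: pres_sym)
    qed
  qed
qed

lemma red1: "red cm1 cn1 w = [] \<Longrightarrow> pres_eq RF w []"
  by (rule red_sound[OF cm1_sound cn1_sound])

lemma red2: "red cm2 cn2 w = [] \<Longrightarrow> pres_eq RA w []"
  by (rule red_sound[OF cm2_sound cn2_sound])

lemma p1_out: "\<not> (d < 32 \<and> 1 \<le> g \<and> g \<le> 6) \<Longrightarrow> p1 d g = d"
  unfolding p1_def by auto
lemma l1_out: "\<not> (d < 32 \<and> 1 \<le> g \<and> g \<le> 6) \<Longrightarrow> l1 d g = []"
  unfolding l1_def by auto
lemma p2_out: "\<not> (d < 2 \<and> g \<le> 4) \<Longrightarrow> p2 d g = d"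
  unfolding p2_def by auto
lemma l2_out: "\<not> (d < 2 \<and> g \<le> 4) \<Longrightarrow> l2 d g = []"
  unfolding l2_def by auto

lemma trace1_out: "\<not> d < 32 \<Longrightarrow> tend p1 d w = d \<and> tout p1 l1 d w = []"
  by (induction w) (auto simp: p1_def l1_def lab_def)
lemma trace2_out: "\<not> d < 2 \<Longrightarrow> tend p2 d w = d \<and> tout p2 l2 d w = []"
  by (induction w) (auto simp: p2_def l2_def lab_def)


lemma gw_list: "list_all (\<lambda>x. fst x \<in> S) w \<Longrightarrow> w \<in> gen_words S"
  by (induction w) auto

lemma A_inv1: "p1 (p1 d g) g = d"
proof (cases "d < 32 \<and> 1 \<le> g \<and> g \<le> 6")
  case True
  then have "d \<in> set D32L" "g \<in> set G6L" using D32 G6 by auto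
  then show ?thesis using chk_inv1 unfolding list_all_iff by blast
next
  case False then show ?thesis by (simp add: p1_out)
qed

lemma A_b1: "d < 32 \<Longrightarrow> p1 d g < 32"
proof (cases "1 \<le> g \<and> g \<le> 6")
  case True
  assume d: "d < 32"
  then have "d \<in> set D32L" "g \<in> set G6L" using D32 G6 True by auto
  then show ?thesis using chk_inv1 unfolding list_all_iff by blast
next
  case False
  assume "d < 32" then show ?thesis using False by (simp add: p1_out)
qed

lemma A_inv2: "p2 (p2 d g) g = d"
proof (cases "d < 2 \<and> g \<le> 4")
  case True
  then have "d \<in> set D2L" "g \<in> set G5L" using D2 G5 by auto
  then show ?thesis using chk_inv2 unfolding list_all_iff by blast
next
  case False then show ?thesis by (simp add: p2_out)
qed

lemma A_b2: "d < 2 \<Longrightarrow> p2 d g < 2"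
proof (cases "g \<le> 4")
  case True
  assume d: "d < 2"
  then have "d \<in> set D2L" "g \<in> set G5L" using D2 G5 True by auto
  then show ?thesis using chk_inv2 unfolding list_all_iff by blast
next
  case False
  assume "d < 2" then show ?thesis using False by (simp add: p2_out)
qed

lemma A_cl1: "tend p2 0 (l1 d g) = 0 \<and> l1 d g \<in> gen_words {0..4}"
proof (cases "d < 32 \<and> 1 \<le> g \<and> g \<le> 6")
  case True
  then have "d \<in> set D32L" "g \<in> set G6L" using D32 G6 by auto
  then have h: "tend p2 0 (l1 d g) = 0 \<and> list_all (\<lambda>x. fst x \<le> 4) (l1 d g)"
    using chk_cl1 unfolding list_all_iff by blast
  then have "list_all (\<lambda>x. fst x \<in> {0..4}) (l1 d g)"
    by (simp add: list_all_iff)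
  then show ?thesis using h gw_list by blast
next
  case False then show ?thesis by (simp add: l1_out)
qed

lemma A_cl2: "tend p1 0 (l2 d g) = 0 \<and> l2 d g \<in> gen_words {1..6}"
proof (cases "d < 2 \<and> g \<le> 4")
  case True
  then have "d \<in> set D2L" "g \<in> set G5L" using D2 G5 by auto
  then have h: "tend p1 0 (l2 d g) = 0 \<and> list_all (\<lambda>x. 1 \<le> fst x \<and> fst x \<le> 6) (l2 d g)"
    using chk_cl2 unfolding list_all_iff by blast
  then have "list_all (\<lambda>x. fst x \<in> {1..6}) (l2 d g)"
    by (simp add: list_all_iff)
  then show ?thesis using h gw_list by blast
next
  case False then show ?thesis by (simp add: l2_out)
qed

lemma A_rel1: "r \<in> RF \<Longrightarrow> tend p1 d r = d \<and> pres_eq RA (tout p1 l1 d r) []"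
proof (cases "d < 32")
  case True
  assume r: "r \<in> RF"
  have "d \<in> set D32L" "r \<in> set R1list" using D32[OF True] RF_sub[OF r] by auto
  then have "tend p1 d r = d \<and> red cm2 cn2 (tout p1 l1 d r) = []"
    using rel1_all by blast
  then show ?thesis using red2 by blast
next
  case False then show ?thesis using trace1_out[OF False] by (simp add: pres_refl)
qed

lemma A_rel2: "r \<in> RA \<Longrightarrow> tend p2 d r = d \<and> pres_eq RF (tout p2 l2 d r) []"
proof (cases "d < 2")
  case True
  assume r: "r \<in> RA"
  have "d \<in> set D2L" "r \<in> set R2list" using D2[OF True] RA_sub[OF r] by auto
  then have "tend p2 d r = d \<and> red cm1 cn1 (tout p2 l2 d r) = []"
    using chk_rel2 unfolding list_all_iff by blast
  then show ?thesis using red1 by blast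
next
  case False then show ?thesis using trace2_out[OF False] by (simp add: pres_refl)
qed

lemma A_back1:
  assumes d: "d < 32" and g: "g \<in> {1..6}"
  shows "pres_eq RF (tout p2 l2 0 (l1 d g)) (t1 d @ [(g, False)] @ inv_pword (t1 (p1 d g)))"
proof -
  have "d \<in> set D32L" "g \<in> set G6L" using D32[OF d] G6 g by auto
  then have "red cm1 cn1 (tout p2 l2 0 (l1 d g) @ inv_pword (t1 d @ [(g, False)] @ inv_pword (t1 (p1 d g)))) = []"
    using back1_all by blast
  then show ?thesis by (rule pres_eq_from_trivial[OF red1])
qed

lemma A_back2:
  assumes d: "d < 2" and g: "g \<in> {0..4}"
  shows "pres_eq RA (tout p1 l1 0 (l2 d g)) (t2 d @ [(g, False)] @ inv_pword (t2 (p2 d g)))"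
proof -
  have "d \<in> set D2L" "g \<in> set G5L" using D2[OF d] G5 g by auto
  then have "red cm2 cn2 (tout p1 l1 0 (l2 d g) @ inv_pword (t2 d @ [(g, False)] @ inv_pword (t2 (p2 d g)))) = []"
    using chk_back2 unfolding list_all_iff by blast
  then show ?thesis by (rule pres_eq_from_trivial[OF red2])
qed

interpretation fb: cdata "{1..6}" RF p1 l1 t1 32 "{0..4}" RA p2 l2 t2 2
proof (unfold_locales)
  show "\<And>d g. p1 (p1 d g) g = d" by (rule A_inv1)
  show "\<And>d g. p2 (p2 d g) g = d" by (rule A_inv2)
  show "\<And>r d. r \<in> RF \<Longrightarrow> tend p1 d r = d \<and> pres_eq RA (tout p1 l1 d r) []" by (rule A_rel1)
  show "\<And>r d. r \<in> RA \<Longrightarrow> tend p2 d r = d \<and> pres_eq RF (tout p2 l2 d r) []" by (rule A_rel2)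
  show "\<And>d g. tend p2 0 (l1 d g) = 0" using A_cl1 by blast
  show "\<And>d g. tend p1 0 (l2 d g) = 0" using A_cl2 by blast
  show "\<And>d g. l1 d g \<in> gen_words {0..4}" using A_cl1 by blast
  show "\<And>d g. l2 d g \<in> gen_words {1..6}" using A_cl2 by blast
  show "\<And>d g. d < 32 \<Longrightarrow> p1 d g < 32" by (rule A_b1)
  show "\<And>d g. d < 2 \<Longrightarrow> p2 d g < 2" by (rule A_b2)
  show "\<And>d g. d < 32 \<Longrightarrow> g \<in> {1..6} \<Longrightarrow>
       pres_eq RF (tout p2 l2 0 (l1 d g)) (t1 d @ [(g, False)] @ inv_pword (t1 (p1 d g)))" by (rule A_back1)
  show "\<And>d g. d < 2 \<Longrightarrow> g \<in> {0..4} \<Longrightarrow>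
       pres_eq RA (tout p1 l1 0 (l2 d g)) (t2 d @ [(g, False)] @ inv_pword (t2 (p2 d g)))" by (rule A_back2)
  show "t1 0 = []" by simp
  show "t2 0 = []" by simp
  show "(0::nat) < 32" by simp
  show "(0::nat) < 2" by simp
qed

theorem theorem1p6:
  shows "commensurable FB7 AP4"
proof -
  have "FB7 = pres_group {1..6} RF" by (simp add: FB7_def RF_def)
  moreover have "AP4 = pres_group {0..4} RA" by (simp add: AP4_def RA_def)
  ultimately show ?thesis using fb.commensurable_result by simp
qed

end
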